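(* Let $p\ge2$, let $\boldsymbol{S}$ be a $p\times p$ symmetric positive semidefinite matrix, let $\rho>0$ be fixed and $k$ an integer with $0\le k\le\binom p2$. Let $\mathcal{C}=\{\boldsymbol{A}\in\mathbb{R}^{p\times p}:\boldsymbol{A}=\boldsymbol{A}^T,\ \|\boldsymbol{A}\|_0\le 2k+p\}$ and define $h_\rho(\boldsymbol{\Sigma})=\ln\det\boldsymbol{\Sigma}+\mathrm{tr}(\boldsymbol{\Sigma}^{-1}\boldsymbol{S})+\frac\rho2\mathrm{dist}(\boldsymbol{\Sigma},\mathcal{C})^2$ for $\boldsymbol{\Sigma}\succ\boldsymbol{0}$ and $h_\rho(\boldsymbol{\Sigma})=+\infty$ otherwise. Given $\boldsymbol{\Sigma}_0$, generate $\boldsymbol{\Sigma}_{k+1}=\boldsymbol{\Sigma}_k+\eta_k\boldsymbol{v}_k$ as follows: pick any $\boldsymbol{\Theta}_k\in P_{\mathcal{C}}(\boldsymbol{\Sigma}_k)$, let $\widehat{\boldsymbol{\Sigma}}_k$ be the unique solution of $\rho\widehat{\boldsymbol{\Sigma}}_k+\boldsymbol{\Sigma}_k^{-1}\widehat{\boldsymbol{\Sigma}}_k\boldsymbol{\Sigma}_k^{-1}=\rho\boldsymbol{\Theta}_k+\boldsymbol{\Sigma}_k^{-1}\boldsymbol{S}\boldsymbol{\Sigma}_k^{-1}$, set $\boldsymbol{v}_k=\widehat{\boldsymbol{\Sigma}}_k-\boldsymbol{\Sigma}_k$, and $\eta_k\in\mathrm{argmin}_{\eta\in[0,1]}h_\rho(\boldsymbol{\Sigma}_k+\eta\boldsymbol{v}_k)$.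 If $\boldsymbol{\Sigma}_0$ is positive definite and $\boldsymbol{S}$ is nonsingular, then the sequence $(\boldsymbol{\Sigma}_k)$ is bounded and lies in the interior of the positive definite cone, and every limit point $\boldsymbol{\Sigma}$ of the sequence is a stationary point of $h_\rho$, i.e. satisfies $\boldsymbol{\Sigma}^{-1}-\boldsymbol{\Sigma}^{-1}\boldsymbol{S}\boldsymbol{\Sigma}^{-1}+\rho(\boldsymbol{\Sigma}-\boldsymbol{\Theta})=\boldsymbol{0}$ for some $\boldsymbol{\Theta}\in P_{\mathcal{C}}(\boldsymbol{\Sigma})$.
   Context: $\|\boldsymbol{A}\|_0$ is the number of nonzero entries of $\boldsymbol{A}$; $\mathrm{dist}$ is Frobenius distance. $P_{\mathcal{C}}(\boldsymbol{\Sigma})$ denotes the (possibly multi-valued) set of Frobenius-nearest points of $\mathcal{C}$ to $\boldsymbol{\Sigma}$. The choice of $\boldsymbol{\Theta}_k$ within $P_{\mathcal{C}}(\boldsymbol{\Sigma}_k)$ is arbitrary, so the iteration is a set-valued algorithm map. *)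

theory Defs
  imports "HOL-Analysis.Analysis"
begin

type_synonym 'n mat = "real^'n^'n"

definition symmetric_mat :: "'n::finite mat \<Rightarrow> bool" where
  "symmetric_mat A \<longleftrightarrow> transpose A = A"

definition psd :: "'n::finite mat \<Rightarrow> bool" where
  "psd A \<longleftrightarrow> symmetric_mat A \<and> (\<forall>x. 0 \<le> x \<bullet> (A *v x))"

definition posdef :: "'n::finite mat \<Rightarrow> bool" where
  "posdef A \<longleftrightarrow> symmetric_mat A \<and> (\<forall>x. x \<noteq> 0 \<longrightarrow> 0 < x \<bullet> (A *v x))"

definition nnz :: "'n::finite mat \<Rightarrow> nat" where
  "nnz A = card {(i, j). A $ i $ j \<noteq> 0}"

definition sparse_set :: "nat \<Rightarrow> 'n::finite mat set" where
  "sparse_set k = {A. symmetric_mat A \<and> nnz A \<le> 2 * k + CARD('n)}"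

(* Note: on real^'n^'n, dist is exactly the Frobenius distance. *)
definition proj_set :: "'n::finite mat set \<Rightarrow> 'n mat \<Rightarrow> 'n mat set" where
  "proj_set C X = {T \<in> C. \<forall>A\<in>C. dist X T \<le> dist X A}"

definition h_rho :: "real \<Rightarrow> nat \<Rightarrow> 'n::finite mat \<Rightarrow> 'n mat \<Rightarrow> ereal" where
  "h_rho \<rho> k S X =
     (if posdef X
      then ereal (ln (det X) + trace (matrix_inv X ** S)
                  + \<rho> / 2 * (infdist X (sparse_set k))\<^sup>2)
      else \<infinity>)"

end

theory Submission
  imports Defs
begin

lemma sym_inner:
  fixes A :: "real^'n^'n"
  assumes "transpose A = A"
  shows "x \<bullet> (A *v y) = (A *v x) \<bullet> y"
proof -
  have "x \<bullet> (A *v y) = (x v* A) \<bullet> y" by (simp add: dot_lmul_matrix)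
  also have "x v* A = transpose A *v x" by simp
  finally show ?thesis using assms by simp
qed

lemma spectral_step:
  fixes A :: "real^'n^'n"
  assumes sym: "transpose A = A"
    and fin: "finite S" and card: "card S < CARD('n)"
    and orth: "\<And>s t. s \<in> S \<Longrightarrow> t \<in> S \<Longrightarrow> s \<noteq> t \<Longrightarrow> s \<bullet> t = 0"
    and eig: "\<And>s. s \<in> S \<Longrightarrow> \<exists>l. A *v s = l *\<^sub>R s"
  shows "\<exists>u. u \<notin> S \<and> norm u = 1 \<and> (\<forall>s\<in>S. s \<bullet> u = 0) \<and> (\<exists>l. A *v u = l *\<^sub>R u)"
proof -
  define W where "W = {x::real^'n. \<forall>s\<in>S. s \<bullet> x = 0}"
  define K where "K = W \<inter> sphere 0 1"
  have dS: "dim S < DIM(real^'n)"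
    using dim_le_card[OF span_superset fin] card by simp
  obtain x0 :: "real^'n" where x0: "x0 \<noteq> 0" "\<And>y. y \<in> span S \<Longrightarrow> orthogonal x0 y"
    using orthogonal_to_subspace_exists[OF dS] by blast
  have x0W: "x0 \<in> W" unfolding W_def mem_Collect_eq
  proof
    fix s assume "s \<in> S"
    then have "orthogonal x0 s" using x0(2) span_base by blast
    then show "s \<bullet> x0 = 0" by (simp add: orthogonal_def inner_commute)
  qed
  have clW: "closed W"
  proof -
    have "W = (\<Inter>s\<in>S. {x. s \<bullet> x = 0})" unfolding W_def by auto
    moreover have "\<And>s. closed {x::real^'n. s \<bullet> x = 0}"
      by (intro closed_Collect_eq continuous_intros)
    ultimately show ?thesis by auto
  qed
  have cK: "compact K" unfolding K_def by (intro closed_Int_compact clW compact_sphere)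
  have WS: "\<And>x c. x \<in> W \<Longrightarrow> c *\<^sub>R x \<in> W" unfolding W_def by auto
  have WA: "\<And>x y. x \<in> W \<Longrightarrow> y \<in> W \<Longrightarrow> x + y \<in> W" unfolding W_def by (auto simp: inner_add_right)
  have neK: "K \<noteq> {}"
  proof -
    have "(1 / norm x0) *\<^sub>R x0 \<in> K" unfolding K_def using x0 x0W WS by auto
    then show ?thesis by blast
  qed
  have contf: "continuous_on K (\<lambda>x. x \<bullet> (A *v x))"
    by (intro continuous_intros linear_continuous_on matrix_vector_mul_bounded_linear)
  obtain u where uK: "u \<in> K" and umax: "\<And>y. y \<in> K \<Longrightarrow> y \<bullet> (A *v y) \<le> u \<bullet> (A *v u)"
    using continuous_attains_sup[OF cK neK contf] by blast
  define l where "l = u \<bullet> (A *v u)"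
  have uW: "u \<in> W" and nu: "norm u = 1" using uK unfolding K_def by auto
  have uu: "u \<bullet> u = 1" using nu by (simp add: norm_eq_1)
  have hom: "y \<bullet> (A *v y) \<le> l * (y \<bullet> y)" if yW: "y \<in> W" for y
  proof (cases "y = 0")
    case True then show ?thesis by simp
  next
    case False
    define z where "z = (1 / norm y) *\<^sub>R y"
    have "z \<in> K" unfolding K_def z_def using False yW WS by auto
    then have "z \<bullet> (A *v z) \<le> l" using umax l_def by auto
    moreover have "z \<bullet> (A *v z) = (y \<bullet> (A *v y)) / (norm y)^2"
      unfolding z_def by (simp add: matrix_vector_mult_scaleR power2_eq_square)
    ultimately have "y \<bullet> (A *v y) \<le> l * (norm y)^2"
      using False by (simp add: divide_le_eq mult.commute)
    then show ?thesis by (simp add: power2_norm_eq_inner)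
  qed
  define w where "w = A *v u - l *\<^sub>R u"
  have AW: "A *v y \<in> W" if "y \<in> W" for y
    unfolding W_def mem_Collect_eq
  proof
    fix s assume sS: "s \<in> S"
    obtain m where m: "A *v s = m *\<^sub>R s" using eig[OF sS] by blast
    have "s \<bullet> (A *v y) = (A *v s) \<bullet> y" using sym_inner[OF sym] by blast
    also have "\<dots> = m * (s \<bullet> y)" using m by simp
    also have "s \<bullet> y = 0" using that sS unfolding W_def by auto
    finally show "s \<bullet> (A *v y) = 0" by simp
  qed
  have wW: "w \<in> W"
  proof -
    have "A *v u + (- l) *\<^sub>R u \<in> W" using AW[OF uW] WS[OF uW] WA by blast
    then show ?thesis unfolding w_def by simp
  qed
  have wu: "w \<bullet> u = 0"
  proof -
    have "w \<bullet> u = (A *v u) \<bullet> u - l * (u \<bullet> u)" unfolding w_def by (simp add: inner_diff_left)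
    also have "(A *v u) \<bullet> u = l" unfolding l_def by (simp add: inner_commute)
    finally show ?thesis using uu by simp
  qed
  have wAu: "w \<bullet> (A *v u) = w \<bullet> w"
  proof -
    have "w \<bullet> w = w \<bullet> (A *v u) - l * (w \<bullet> u)" unfolding w_def by (simp add: inner_diff_right)
    then show ?thesis using wu by simp
  qed
  have key: "2 * t * (w \<bullet> w) \<le> t^2 * (l * (w \<bullet> w) - w \<bullet> (A *v w))" for t :: real
  proof -
    have "u + t *\<^sub>R w \<in> W" using uW wW WS WA by blast
    from hom[OF this]
    have H: "(u + t *\<^sub>R w) \<bullet> (A *v (u + t *\<^sub>R w)) \<le> l * ((u + t *\<^sub>R w) \<bullet> (u + t *\<^sub>R w))" .
    have e1: "(u + t *\<^sub>R w) \<bullet> (A *v (u + t *\<^sub>R w)) = l + 2 * t * (w \<bullet> w) + t^2 * (w \<bullet> (A *v w))"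
    proof -
      have "u \<bullet> (A *v w) = w \<bullet> (A *v u)" using sym_inner[OF sym, of u w] by (simp add: inner_commute)
      moreover have "A *v (u + t *\<^sub>R w) = A *v u + t *\<^sub>R (A *v w)"
        by (simp add: matrix_vector_right_distrib matrix_vector_mult_scaleR)
      ultimately show ?thesis
        by (simp add: inner_add_left inner_add_right wAu l_def power2_eq_square algebra_simps)
    qed
    have e2: "(u + t *\<^sub>R w) \<bullet> (u + t *\<^sub>R w) = 1 + t^2 * (w \<bullet> w)"
      by (simp add: inner_add_left inner_add_right uu wu inner_commute[of u w] power2_eq_square)
    have "l + 2 * t * (w \<bullet> w) + t^2 * (w \<bullet> (A *v w)) \<le> l * (1 + t^2 * (w \<bullet> w))"
      using H unfolding e1 e2 .
    then show ?thesis by (simp add: algebra_simps)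
  qed
  define c where "c = l * (w \<bullet> w) - w \<bullet> (A *v w)"
  have w0: "w \<bullet> w = 0"
  proof (rule ccontr)
    assume ne: "w \<bullet> w \<noteq> 0"
    then have pos: "w \<bullet> w > 0" by (simp add: order_le_neq_trans)
    have k1: "2 * (w \<bullet> w) \<le> c" using key[of 1] unfolding c_def by simp
    then have "c > 0" using pos by linarith
    define t where "t = (w \<bullet> w) / c"
    have tpos: "t > 0" using pos \<open>c > 0\<close> unfolding t_def by simp
    have "2 * t * (w \<bullet> w) \<le> t * (t * c)" using key[of t] unfolding c_def by (simp add: power2_eq_square)
    moreover have "t * c = w \<bullet> w" unfolding t_def using \<open>c > 0\<close> by simp
    ultimately show False using tpos pos by (simp add: mult_le_cancel_left)
  qed
  then have "A *v u = l *\<^sub>R u" unfolding w_def by simp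
  moreover have "u \<notin> S"
  proof
    assume "u \<in> S" then have "u \<bullet> u = 0" using uW unfolding W_def by auto
    then show False using uu by simp
  qed
  moreover have "\<forall>s\<in>S. s \<bullet> u = 0" using uW unfolding W_def by auto
  ultimately show ?thesis using nu by blast
qed

lemma spectral_sets:
  fixes A :: "real^'n^'n"
  assumes sym: "transpose A = A"
  shows "m \<le> CARD('n) \<Longrightarrow> \<exists>S. finite S \<and> card S = m \<and> (\<forall>s\<in>S. norm s = 1 \<and> (\<exists>l. A *v s = l *\<^sub>R s))
            \<and> (\<forall>s\<in>S. \<forall>t\<in>S. s \<noteq> t \<longrightarrow> s \<bullet> t = 0)"
proof (induction m)
  case 0
  then show ?case by (intro exI[of _ "{}"]) auto
next
  case (Suc m)
  then obtain S where S: "finite S" "card S = m" "\<forall>s\<in>S. norm s = 1 \<and> (\<exists>l. A *v s = l *\<^sub>R s)"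
      "\<forall>s\<in>S. \<forall>t\<in>S. s \<noteq> t \<longrightarrow> s \<bullet> t = 0" by auto
  have "card S < CARD('n)" using Suc.prems S(2) by simp
  from spectral_step[OF sym S(1) this] S(3,4)
  obtain u where u: "u \<notin> S" "norm u = 1" "\<forall>s\<in>S. s \<bullet> u = 0" "\<exists>l. A *v u = l *\<^sub>R u"
    by blast
  show ?case
  proof (intro exI[of _ "insert u S"] conjI)
    show "finite (insert u S)" using S by simp
    show "card (insert u S) = Suc m" using S u by simp
    show "\<forall>s\<in>insert u S. norm s = 1 \<and> (\<exists>l. A *v s = l *\<^sub>R s)" using S u by auto
    show "\<forall>s\<in>insert u S. \<forall>t\<in>insert u S. s \<noteq> t \<longrightarrow> s \<bullet> t = 0"
      using S u by (auto simp: inner_commute)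
  qed
qed

definition diagm :: "('n::finite \<Rightarrow> real) \<Rightarrow> real^'n^'n" where
  "diagm d = (\<chi> i j. if i = j then d i else 0)"

lemma diagm_mult_left: "(diagm d ** X) $ i $ j = d i * X $ i $ j"
  by (simp add: diagm_def matrix_matrix_mult_def if_distrib if_distribR sum.delta cong: if_cong)

lemma diagm_mult_right: "(X ** diagm d) $ i $ j = X $ i $ j * d j"
  by (simp add: diagm_def matrix_matrix_mult_def if_distrib if_distribR sum.delta' cong: if_cong)

lemma transpose_diagm[simp]: "transpose (diagm d) = diagm d"
  by (simp add: diagm_def transpose_def vec_eq_iff)

lemma spectral:
  fixes A :: "real^'n^'n"
  assumes sym: "transpose A = A"
  obtains U :: "real^'n^'n" and d where "transpose U ** U = mat 1" "U ** transpose U = mat 1"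
    "A = U ** diagm d ** transpose U"
proof -
  obtain S where S: "finite S" "card S = CARD('n)" "\<forall>s\<in>S. norm s = 1 \<and> (\<exists>l. A *v s = l *\<^sub>R s)"
      "\<forall>s\<in>S. \<forall>t\<in>S. s \<noteq> t \<longrightarrow> s \<bullet> t = 0"
    using spectral_sets[OF sym, of "CARD('n)"] by auto
  obtain f where f: "bij_betw f (UNIV::'n set) S"
    using finite_same_card_bij[of "UNIV::'n set" S] S(1,2) by auto
  have fS: "f i \<in> S" for i using f by (auto simp: bij_betw_def)
  have finj: "f i = f j \<Longrightarrow> i = j" for i j using f by (auto simp: bij_betw_def inj_def)
  define l where "l i = (SOME c. A *v f i = c *\<^sub>R f i)" for i
  have eig: "A *v f i = l i *\<^sub>R f i" for i
    unfolding l_def using S(3) fS[of i] by (metis (mono_tags, lifting) someI_ex)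
  define U :: "real^'n^'n" where "U = (\<chi> i j. f j $ i)"
  have UtU: "transpose U ** U = mat 1"
  proof -
    have "(transpose U ** U) $ i $ j = (if i = j then 1 else 0)" for i j
    proof -
      have "(transpose U ** U) $ i $ j = f i \<bullet> f j"
        by (simp add: U_def transpose_def matrix_matrix_mult_def inner_vec_def)
      also have "\<dots> = (if i = j then 1 else 0)"
        using S(3,4) fS[of i] fS[of j] finj[of i j] by (auto simp: norm_eq_1)
      finally show ?thesis .
    qed
    then show ?thesis by (simp add: mat_def vec_eq_iff)
  qed
  then have UUt: "U ** transpose U = mat 1" using matrix_left_right_inverse by blast
  have AU: "A ** U = U ** diagm l"
  proof -
    have "(A ** U) $ i $ j = (U ** diagm l) $ i $ j" for i j
    proof -
      have "(A ** U) $ i $ j = (A *v f j) $ i"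
        by (simp add: U_def matrix_matrix_mult_def matrix_vector_mult_def)
      also have "\<dots> = l j * f j $ i" using eig by simp
      also have "\<dots> = (U ** diagm l) $ i $ j" by (simp add: diagm_mult_right U_def)
      finally show ?thesis .
    qed
    then show ?thesis by (simp add: vec_eq_iff)
  qed
  have "A = A ** (U ** transpose U)" using UUt by simp
  also have "\<dots> = U ** diagm l ** transpose U" by (simp add: matrix_mul_assoc AU)
  finally have "A = U ** diagm l ** transpose U" .
  then show ?thesis by (rule that[OF UtU UUt])
qed

type_synonym 'n m = "real^'n^'n"

lemma inv_mat:
  fixes A :: "real^'n^'n"
  assumes "invertible A"
  shows "A ** matrix_inv A = mat 1" "matrix_inv A ** A = mat 1"
proof -
  have "\<exists>A'. A ** A' = mat 1 \<and> A' ** A = mat 1" using assms unfolding invertible_def by blast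
  then have "A ** matrix_inv A = mat 1 \<and> matrix_inv A ** A = mat 1"
    unfolding matrix_inv_def by (rule someI_ex)
  then show "A ** matrix_inv A = mat 1" "matrix_inv A ** A = mat 1" by auto
qed

lemma inv_unique:
  fixes A B :: "real^'n^'n"
  assumes "A ** B = mat 1"
  shows "invertible A" "matrix_inv A = B"
proof -
  have BA: "B ** A = mat 1" using assms matrix_left_right_inverse by blast
  then show inv: "invertible A" unfolding invertible_def using assms by blast
  have "matrix_inv A = matrix_inv A ** (A ** B)" using assms by simp
  also have "\<dots> = B" by (simp add: matrix_mul_assoc inv_mat[OF inv])
  finally show "matrix_inv A = B" .
qed

lemma mat_inner: "(A::real^'n^'m) \<bullet> B = (\<Sum>i\<in>UNIV. \<Sum>j\<in>UNIV. A$i$j * B$i$j)"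
  by (simp add: inner_vec_def)

lemma trace_inner: "trace (transpose (A::real^'n^'n) ** B) = A \<bullet> B"
  by (simp add: trace_def matrix_matrix_mult_def transpose_def inner_vec_def, rule sum.swap)

lemma trace_cyc: fixes A B :: "real^'n^'n" shows "trace (A ** B) = trace (B ** A)"
  by (rule trace_mul_sym)

lemma trace_scaleR: "trace (c *\<^sub>R (A::real^'n^'n)) = c * trace A"
  by (simp add: trace_def sum_distrib_left)

lemma mm_add_r: "((A::real^'n^'n) + B) ** C = A ** C + B ** C"
  by (simp add: matrix_matrix_mult_def vec_eq_iff sum.distrib distrib_right)
lemma mm_diff_l: "(A::real^'n^'n) ** (B - C) = A ** B - A ** C"
  by (simp add: matrix_matrix_mult_def vec_eq_iff sum_subtractf right_diff_distrib)
lemma mm_diff_r: "((A::real^'n^'n) - B) ** C = A ** C - B ** C"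
  by (simp add: matrix_matrix_mult_def vec_eq_iff sum_subtractf left_diff_distrib)
lemma mm_scale_l: "(c *\<^sub>R (A::real^'n^'n)) ** B = c *\<^sub>R (A ** B)"
  by (simp add: scalar_matrix_assoc)
lemma mm_scale_r: "(A::real^'n^'n) ** (c *\<^sub>R B) = c *\<^sub>R (A ** B)"
  by (simp add: matrix_scalar_ac scalar_matrix_assoc)
lemma transpose_add: "transpose ((A::real^'n^'n) + B) = transpose A + transpose B"
  by (simp add: transpose_def vec_eq_iff)
lemma transpose_diff: "transpose ((A::real^'n^'n) - B) = transpose A - transpose B"
  by (simp add: transpose_def vec_eq_iff)
lemma transpose_scale: "transpose (c *\<^sub>R (A::real^'n^'n)) = c *\<^sub>R transpose A"
  by (simp add: transpose_scalar)
lemma transpose_zero: "transpose (0::real^'n^'n) = 0"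
  by (simp add: transpose_def vec_eq_iff)

lemma inner_mm: fixes A B C :: "real^'n^'n" shows "A \<bullet> (B ** C) = (transpose B ** A) \<bullet> C"
proof -
  have "A \<bullet> (B ** C) = trace (transpose A ** B ** C)" by (simp only: trace_inner[symmetric] matrix_mul_assoc)
  also have "\<dots> = trace (transpose (transpose B ** A) ** C)" by (simp add: matrix_transpose_mul)
  also have "\<dots> = (transpose B ** A) \<bullet> C" by (rule trace_inner)
  finally show ?thesis .
qed

lemma inner_mm2: fixes A B C :: "real^'n^'n" shows "A \<bullet> (B ** C) = (A ** transpose C) \<bullet> B"
proof -
  have "A \<bullet> (B ** C) = trace (transpose A ** B ** C)" by (simp only: trace_inner[symmetric] matrix_mul_assoc)
  also have "\<dots> = trace (C ** (transpose A ** B))" by (rule trace_cyc)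
  also have "\<dots> = trace (C ** transpose A ** B)" by (simp only: matrix_mul_assoc)
  also have "\<dots> = trace (transpose (A ** transpose C) ** B)" by (simp add: matrix_transpose_mul)
  also have "\<dots> = (A ** transpose C) \<bullet> B" by (rule trace_inner)
  finally show ?thesis .
qed

lemma inner_vec_mat: "(x::real^'n) \<bullet> (U *v z) = (transpose U *v x) \<bullet> z"
proof -
  have "x \<bullet> (U *v z) = (x v* U) \<bullet> z" by (simp add: dot_lmul_matrix)
  then show ?thesis by simp
qed

lemma diag_quad: "(y::real^'n) \<bullet> (diagm d *v y) = (\<Sum>i\<in>UNIV. d i * (y$i)^2)"
  by (simp add: diagm_def matrix_vector_mult_def inner_vec_def if_distrib if_distribR sum.delta
      power2_eq_square mult_ac cong: if_cong)

lemma spec_quad: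
  fixes A U :: "real^'n^'n"
  assumes UtU: "transpose U ** U = mat 1" and UUt: "U ** transpose U = mat 1"
    and A: "A = U ** diagm d ** transpose U"
  shows "x \<bullet> (A *v x) = (\<Sum>i\<in>UNIV. d i * ((transpose U *v x)$i)^2)"
    "(\<Sum>i\<in>UNIV. ((transpose U *v x)$i)^2) = x \<bullet> x"
proof -
  have "A *v x = U *v (diagm d *v (transpose U *v x))" by (simp only: A matrix_vector_mul_assoc matrix_mul_assoc)
  then have "x \<bullet> (A *v x) = (transpose U *v x) \<bullet> (diagm d *v (transpose U *v x))"
    by (simp add: inner_vec_mat)
  then show "x \<bullet> (A *v x) = (\<Sum>i\<in>UNIV. d i * ((transpose U *v x)$i)^2)" by (simp add: diag_quad)
  have "(transpose U *v x) \<bullet> (transpose U *v x) = x \<bullet> (U *v (transpose U *v x))"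
    by (simp add: inner_vec_mat)
  also have "\<dots> = x \<bullet> x" by (simp only: matrix_vector_mul_assoc UUt matrix_vector_mul_lid)
  finally show "(\<Sum>i\<in>UNIV. ((transpose U *v x)$i)^2) = x \<bullet> x"
    by (simp add: inner_vec_def power2_eq_square)
qed

lemma spec_eig:
  fixes A U :: "real^'n^'n"
  assumes UtU: "transpose U ** U = mat 1" and UUt: "U ** transpose U = mat 1"
    and A: "A = U ** diagm d ** transpose U"
  shows "(U *v axis i 1) \<bullet> (A *v (U *v axis i 1)) = d i" "U *v axis i 1 \<noteq> 0"
proof -
  have e: "transpose U *v (U *v axis i 1) = axis i 1" by (simp add: matrix_vector_mul_assoc UtU)
  show "(U *v axis i 1) \<bullet> (A *v (U *v axis i 1)) = d i"
    unfolding spec_quad(1)[OF assms] e by (simp add: axis_def if_distrib if_distribR sum.delta cong: if_cong)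
  show "U *v axis i 1 \<noteq> 0"
  proof
    assume "U *v axis i 1 = 0"
    then have "transpose U *v (U *v axis i 1) = 0" by simp
    then show False unfolding e by (simp add: axis_eq_0_iff)
  qed
qed

lemma spec_det:
  fixes A U :: "real^'n^'n"
  assumes UtU: "transpose U ** U = mat 1" and A: "A = U ** diagm d ** transpose U"
  shows "det A = (\<Prod>i\<in>UNIV. d i)"
proof -
  have "det A = det U * det (diagm d) * det (transpose U)" by (simp add: A det_mul)
  also have "\<dots> = det (diagm d) * det (transpose U ** U)" by (simp add: det_mul)
  also have "\<dots> = det (diagm d)" using UtU by simp
  also have "\<dots> = (\<Prod>i\<in>UNIV. d i)" by (subst det_diagonal) (auto simp: diagm_def)
  finally show ?thesis .
qed

lemma spec_trace:
  fixes A U :: "real^'n^'n"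
  assumes UtU: "transpose U ** U = mat 1" and A: "A = U ** diagm d ** transpose U"
  shows "trace A = (\<Sum>i\<in>UNIV. d i)"
proof -
  have "trace A = trace (transpose U ** (U ** diagm d))" unfolding A by (rule trace_cyc)
  also have "\<dots> = trace (diagm d)" by (simp add: matrix_mul_assoc UtU)
  finally show ?thesis by (simp add: trace_def diagm_def)
qed

lemma diagm_mult: "diagm a ** diagm b = diagm (\<lambda>i. a i * b i)"
  by (simp add: vec_eq_iff diagm_mult_left) (simp add: diagm_def)

lemma spec_inv:
  fixes A U :: "real^'n^'n"
  assumes UtU: "transpose U ** U = mat 1" and UUt: "U ** transpose U = mat 1"
    and A: "A = U ** diagm d ** transpose U" and nz: "\<And>i. d i \<noteq> 0"
  shows "invertible A" "matrix_inv A = U ** diagm (\<lambda>i. 1 / d i) ** transpose U"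
proof -
  have dd: "diagm d ** diagm (\<lambda>i. 1 / d i) = mat 1"
  proof -
    have "diagm (\<lambda>i. d i * (1 / d i)) = mat 1" using nz by (simp add: diagm_def mat_def vec_eq_iff)
    then show ?thesis by (simp only: diagm_mult)
  qed
  have "A ** (U ** diagm (\<lambda>i. 1 / d i) ** transpose U)
      = U ** (diagm d ** (transpose U ** U) ** diagm (\<lambda>i. 1 / d i)) ** transpose U"
    by (simp add: A matrix_mul_assoc)
  also have "\<dots> = mat 1" by (simp only: UtU matrix_mul_rid dd UUt)
  finally have *: "A ** (U ** diagm (\<lambda>i. 1 / d i) ** transpose U) = mat 1" .
  show "invertible A" "matrix_inv A = U ** diagm (\<lambda>i. 1 / d i) ** transpose U"
    using inv_unique[OF *] by auto
qed

lemma norm_sq_vec: "(norm (x::'a::real_inner^'n))^2 = (\<Sum>i\<in>UNIV. (norm (x$i))^2)"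
  by (simp add: power2_norm_eq_inner inner_vec_def)

lemma mv_norm: "norm ((Y::real^'n^'m) *v x) \<le> norm Y * norm x"
proof -
  have "(norm (Y *v x))^2 = (\<Sum>i\<in>UNIV. ((Y$i) \<bullet> x)^2)"
    by (simp add: norm_sq_vec matrix_vector_mul_component)
  also have "\<dots> \<le> (\<Sum>i\<in>UNIV. (norm (Y$i))^2 * (norm x)^2)"
  proof (rule sum_mono)
    fix i
    have "\<bar>(Y$i) \<bullet> x\<bar> \<le> norm (Y$i) * norm x" by (rule Cauchy_Schwarz_ineq2)
    then have "\<bar>(Y$i) \<bullet> x\<bar>^2 \<le> (norm (Y$i) * norm x)^2" by (rule power_mono) simp
    then show "((Y$i) \<bullet> x)^2 \<le> (norm (Y$i))^2 * (norm x)^2" by (simp add: power_mult_distrib)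
  qed
  also have "\<dots> = (norm Y * norm x)^2" by (simp add: norm_sq_vec sum_distrib_right power_mult_distrib)
  finally show ?thesis by (simp add: power2_le_iff_abs_le)
qed

lemma mm_entry: "((A::real^'n^'m) ** B) $ i $ j = (A$i) \<bullet> (column j B)"
  by (simp add: matrix_matrix_mult_def inner_vec_def column_def mult_ac)

lemma norm_sq_columns: "(norm (B::real^'n^'m))^2 = (\<Sum>j\<in>UNIV. (norm (column j B))^2)"
  by (simp add: norm_sq_vec column_def) (rule sum.swap)

lemma mm_norm: "norm ((A::real^'n^'m) ** (B::real^'k^'n)) \<le> norm A * norm B"
proof -
  have "(norm (A ** B))^2 = (\<Sum>i\<in>UNIV. \<Sum>j\<in>UNIV. ((A$i) \<bullet> (column j B))^2)"
    by (simp add: norm_sq_vec mm_entry)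
  also have "\<dots> \<le> (\<Sum>i\<in>UNIV. \<Sum>j\<in>UNIV. (norm (A$i))^2 * (norm (column j B))^2)"
  proof (intro sum_mono)
    fix i j
    have "\<bar>(A$i) \<bullet> column j B\<bar> \<le> norm (A$i) * norm (column j B)" by (rule Cauchy_Schwarz_ineq2)
    then have "\<bar>(A$i) \<bullet> column j B\<bar>^2 \<le> (norm (A$i) * norm (column j B))^2" by (rule power_mono) simp
    then show "((A$i) \<bullet> column j B)^2 \<le> (norm (A$i))^2 * (norm (column j B))^2" by (simp add: power_mult_distrib)
  qed
  also have "\<dots> = (norm A * norm B)^2"
    by (simp add: norm_sq_vec[of A] norm_sq_columns[of B] sum_product power_mult_distrib)
  finally show ?thesis by (simp add: power2_le_iff_abs_le)
qed

lemma bb_mm: "bounded_bilinear (\<lambda>(A::real^'n^'n) (B::real^'n^'n). A ** B)"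
proof
  fix a a' b b' :: "real^'n^'n" and r :: real
  show "(a + a') ** b = a ** b + a' ** b" by (rule mm_add_r)
  show "a ** (b + b') = a ** b + a ** b'" by (rule matrix_add_ldistrib)
  show "(r *\<^sub>R a) ** b = r *\<^sub>R (a ** b)" by (rule mm_scale_l)
  show "a ** (r *\<^sub>R b) = r *\<^sub>R (a ** b)" by (rule mm_scale_r)
next
  show "\<exists>K. \<forall>a b::real^'n^'n. norm (a ** b) \<le> norm a * norm b * K"
    by (rule exI[of _ 1]) (simp add: mm_norm)
qed

lemmas tendsto_mm = bounded_bilinear.tendsto[OF bb_mm]

lemma quad_norm: "\<bar>x \<bullet> ((Y::real^'n^'n) *v x)\<bar> \<le> norm Y * (x \<bullet> x)"
proof -
  have "\<bar>x \<bullet> (Y *v x)\<bar> \<le> norm x * norm (Y *v x)" by (rule Cauchy_Schwarz_ineq2)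
  also have "\<dots> \<le> norm x * (norm Y * norm x)" by (simp add: mult_left_mono mv_norm)
  also have "\<dots> = norm Y * (x \<bullet> x)" by (simp add: power2_norm_eq_inner[symmetric] power2_eq_square)
  finally show ?thesis .
qed

lemma axis_quad: "axis i 1 \<bullet> ((A::real^'n^'n) *v axis j 1) = A$i$j"
proof -
  have "(A *v axis j 1) $ i = A$i$j"
    by (simp add: matrix_vector_mult_def axis_def if_distrib if_distribR sum.delta' cong: if_cong)
  then show ?thesis by (simp add: inner_axis')
qed

lemma entry_bound:
  fixes A :: "real^'n^'n"
  assumes sym: "transpose A = A" and psd: "\<And>x. 0 \<le> x \<bullet> (A *v x)"
    and ub: "\<And>x. x \<bullet> (A *v x) \<le> b * (x \<bullet> x)"
  shows "\<bar>A$i$j\<bar> \<le> b"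
proof -
  have Aji: "A$j$i = A$i$j" using sym by (metis transpose_def vec_lambda_beta)
  have ii: "A$i$i \<le> b" using ub[of "axis i 1"] unfolding axis_quad by (simp add: inner_axis_axis)
  have jj: "A$j$j \<le> b" using ub[of "axis j 1"] unfolding axis_quad by (simp add: inner_axis_axis)
  have p: "0 \<le> A$i$i + A$j$j + 2 * A$i$j"
    using psd[of "axis i 1 + axis j 1"] Aji
    by (simp add: matrix_vector_right_distrib inner_add_left inner_add_right axis_quad)
  have m: "0 \<le> A$i$i + A$j$j - 2 * A$i$j"
    using psd[of "axis i 1 - axis j 1"] Aji
    by (simp add: matrix_vector_mult_diff_distrib inner_diff_left inner_diff_right axis_quad)
  show ?thesis using ii jj p m by linarith
qed

lemma norm_le_entries: "norm (A::real^'n^'n) \<le> (\<Sum>i\<in>UNIV. \<Sum>j\<in>UNIV. \<bar>A$i$j\<bar>)"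
proof -
  have "norm A \<le> (\<Sum>i\<in>UNIV. norm (A$i))"
    by (simp add: norm_vec_def L2_set_le_sum)
  also have "\<dots> \<le> (\<Sum>i\<in>UNIV. \<Sum>j\<in>UNIV. \<bar>A$i$j\<bar>)" by (intro sum_mono norm_le_l1_cart)
  finally show ?thesis .
qed

lemma norm_bound_quad:
  fixes A :: "real^'n^'n"
  assumes sym: "transpose A = A" and psd: "\<And>x. 0 \<le> x \<bullet> (A *v x)"
    and ub: "\<And>x. x \<bullet> (A *v x) \<le> b * (x \<bullet> x)"
  shows "norm A \<le> real (CARD('n))^2 * b"
proof -
  have "norm A \<le> (\<Sum>i\<in>(UNIV::'n set). \<Sum>j\<in>(UNIV::'n set). b)"
    using norm_le_entries[of A] entry_bound[OF assms] by (meson order_trans sum_mono)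
  then show ?thesis by (simp add: power2_eq_square)
qed

definition qlb :: "real \<Rightarrow> real^'n^'n \<Rightarrow> bool" where
  "qlb a X \<longleftrightarrow> (\<forall>x. a * (x \<bullet> x) \<le> x \<bullet> (X *v x))"

lemma posdef_sym: "posdef X \<Longrightarrow> transpose X = X"
  by (simp add: posdef_def symmetric_mat_def)

lemma posdef_spec:
  fixes X :: "real^'n^'n"
  assumes "posdef X"
  obtains U :: "real^'n^'n" and d where "transpose U ** U = mat 1" "U ** transpose U = mat 1"
    "X = U ** diagm d ** transpose U" "\<And>i. d i > 0"
proof -
  obtain U :: "real^'n^'n" and d where U: "transpose U ** U = mat 1" "U ** transpose U = mat 1"
    "X = U ** diagm d ** transpose U"
    using spectral[OF posdef_sym[OF assms]] by blast
  have "d i > 0" for i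
  proof -
    have "0 < (U *v axis i 1) \<bullet> (X *v (U *v axis i 1))"
      using spec_eig(2)[OF U, of i] assms unfolding posdef_def by blast
    then show ?thesis using spec_eig(1)[OF U, of i] by simp
  qed
  then show ?thesis using that U by blast
qed

lemma unit_col:
  fixes U :: "real^'n^'n"
  assumes UtU: "transpose U ** U = mat 1"
  shows "(U *v axis i 1) \<bullet> (U *v axis i 1) = 1"
proof -
  have "(U *v axis i 1) \<bullet> (U *v axis i 1) = (transpose U *v (U *v axis i 1)) \<bullet> axis i 1"
    by (rule inner_vec_mat)
  also have "transpose U *v (U *v axis i 1) = axis i 1"
    by (simp only: matrix_vector_mul_assoc UtU matrix_vector_mul_lid)
  finally show ?thesis by (simp add: inner_axis_axis)
qed

lemma spec_lb:
  fixes X U :: "real^'n^'n"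
  assumes UtU: "transpose U ** U = mat 1" and UUt: "U ** transpose U = mat 1"
    and X: "X = U ** diagm d ** transpose U" and lb: "\<And>i. a \<le> d i"
  shows "a * (x \<bullet> x) \<le> x \<bullet> (X *v x)"
proof -
  have "a * (x \<bullet> x) = (\<Sum>i\<in>UNIV. a * ((transpose U *v x)$i)^2)"
    using spec_quad(2)[OF assms(1-3), of x] by (simp add: sum_distrib_left[symmetric])
  also have "\<dots> \<le> (\<Sum>i\<in>UNIV. d i * ((transpose U *v x)$i)^2)"
    by (intro sum_mono mult_right_mono lb) simp
  also have "\<dots> = x \<bullet> (X *v x)" using spec_quad(1)[OF assms(1-3)] by simp
  finally show ?thesis .
qed

lemma spec_ub:
  fixes X U :: "real^'n^'n"
  assumes UtU: "transpose U ** U = mat 1" and UUt: "U ** transpose U = mat 1"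
    and X: "X = U ** diagm d ** transpose U" and ub: "\<And>i. d i \<le> b"
  shows "x \<bullet> (X *v x) \<le> b * (x \<bullet> x)"
proof -
  have "x \<bullet> (X *v x) = (\<Sum>i\<in>UNIV. d i * ((transpose U *v x)$i)^2)" using spec_quad(1)[OF assms(1-3)] by simp
  also have "\<dots> \<le> (\<Sum>i\<in>UNIV. b * ((transpose U *v x)$i)^2)"
    by (intro sum_mono mult_right_mono ub) simp
  also have "\<dots> = b * (x \<bullet> x)"
    using spec_quad(2)[OF assms(1-3), of x] by (simp add: sum_distrib_left[symmetric])
  finally show ?thesis .
qed

lemma spec_d_lb:
  fixes X U :: "real^'n^'n"
  assumes UtU: "transpose U ** U = mat 1" and UUt: "U ** transpose U = mat 1"
    and X: "X = U ** diagm d ** transpose U" and q: "qlb a X"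
  shows "a \<le> d i"
proof -
  have "a * ((U *v axis i 1) \<bullet> (U *v axis i 1)) \<le> (U *v axis i 1) \<bullet> (X *v (U *v axis i 1))"
    using q unfolding qlb_def by blast
  then show ?thesis using spec_eig(1)[OF assms(1-3)] unit_col[OF UtU] by simp
qed

lemma posdef_qlb:
  fixes X :: "real^'n^'n"
  assumes "posdef X"
  obtains a where "a > 0" "qlb a X"
proof -
  obtain U :: "real^'n^'n" and d :: "'n \<Rightarrow> real" where U: "transpose U ** U = mat 1" "U ** transpose U = mat 1"
    "X = U ** diagm d ** transpose U" "\<And>i. d i > 0"
    using posdef_spec[OF assms] by blast
  define a where "a = Min (range d)"
  have apos: "a > 0" unfolding a_def using U(4) by (subst Min_gr_iff) auto
  have ad: "a \<le> d i" for i unfolding a_def by (rule Min_le) auto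
  have q: "qlb a X" unfolding qlb_def
  proof
    fix x show "a * (x \<bullet> x) \<le> x \<bullet> (X *v x)" by (rule spec_lb[OF U(1-3) ad])
  qed
  show ?thesis by (rule that[OF apos q])
qed

lemma qlb_posdef:
  fixes X :: "real^'n^'n"
  assumes "transpose X = X" "a > 0" "qlb a X"
  shows "posdef X"
  unfolding posdef_def symmetric_mat_def
proof (intro conjI allI impI)
  show "transpose X = X" by fact
  fix x :: "real^'n" assume "x \<noteq> 0"
  then have "0 < a * (x \<bullet> x)" using assms(2) by simp
  also have "\<dots> \<le> x \<bullet> (X *v x)" using assms(3) unfolding qlb_def by blast
  finally show "0 < x \<bullet> (X *v x)" .
qed

lemma posdef_psd: "posdef X \<Longrightarrow> 0 \<le> x \<bullet> (X *v x)"
proof (cases "x = 0")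
  case True then show ?thesis by simp
next
  case False
  assume "posdef X"
  then have "0 < x \<bullet> (X *v x)" using False unfolding posdef_def by blast
  then show ?thesis by (rule less_imp_le)
qed

lemma posdef_inv:
  fixes X :: "real^'n^'n"
  assumes pd: "posdef X" and q: "qlb a X" and a: "a > 0"
  shows "invertible X" "transpose (matrix_inv X) = matrix_inv X" "posdef (matrix_inv X)"
    "\<And>x. x \<bullet> (matrix_inv X *v x) \<le> (1/a) * (x \<bullet> x)"
    "norm (matrix_inv X) \<le> real (CARD('n))^2 * (1/a)"
proof -
  obtain U :: "real^'n^'n" and d :: "'n \<Rightarrow> real" where U: "transpose U ** U = mat 1" "U ** transpose U = mat 1"
    "X = U ** diagm d ** transpose U" "\<And>i. d i > 0"
    using posdef_spec[OF pd] by blast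
  have da: "a \<le> d i" for i using spec_d_lb[OF U(1-3) q] .
  have nz: "d i \<noteq> 0" for i using U(4)[of i] by simp
  note I = spec_inv[OF U(1-3) nz]
  show inv: "invertible X" by (rule I(1))
  show sy: "transpose (matrix_inv X) = matrix_inv X"
    unfolding I(2) by (simp add: matrix_transpose_mul matrix_mul_assoc)
  have ub: "x \<bullet> (matrix_inv X *v x) \<le> (1/a) * (x \<bullet> x)" for x
  proof -
    have "1 / d i \<le> 1 / a" for i using da[of i] a by (simp add: frac_le)
    from spec_ub[OF U(1,2) refl this]
    show ?thesis unfolding I(2) .
  qed
  then show "\<And>x. x \<bullet> (matrix_inv X *v x) \<le> (1/a) * (x \<bullet> x)" .
  have lb: "(1 / (Max (range d))) * (x \<bullet> x) \<le> x \<bullet> (matrix_inv X *v x)" for x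
  proof -
    have "1 / Max (range d) \<le> 1 / d i" for i
    proof -
      have "d i \<le> Max (range d)" by (rule Max_ge) auto
      then show ?thesis using U(4)[of i] by (simp add: frac_le)
    qed
    from spec_lb[OF U(1,2) refl this]
    show ?thesis unfolding I(2) .
  qed
  have mpos: "Max (range d) > 0" using U(4) by (subst Max_gr_iff) auto
  have mq: "qlb (1 / Max (range d)) (matrix_inv X)" unfolding qlb_def using lb by blast
  show "posdef (matrix_inv X)"
    by (rule qlb_posdef[OF sy _ mq]) (use mpos in simp)
  have psd: "0 \<le> x \<bullet> (matrix_inv X *v x)" for x
  proof -
    have "0 \<le> (1 / (Max (range d))) * (x \<bullet> x)" using mpos by simp
    also have "\<dots> \<le> x \<bullet> (matrix_inv X *v x)" by (rule lb)
    finally show ?thesis .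
  qed
  show "norm (matrix_inv X) \<le> real (CARD('n))^2 * (1/a)"
    by (rule norm_bound_quad[OF sy psd ub])
qed

lemma posdef_det_pos:
  fixes X :: "real^'n^'n"
  assumes "posdef X" shows "det X > 0"
proof -
  obtain U :: "real^'n^'n" and d :: "'n \<Rightarrow> real" where U: "transpose U ** U = mat 1" "U ** transpose U = mat 1"
    "X = U ** diagm d ** transpose U" "\<And>i. d i > 0"
    using posdef_spec[OF assms] by blast
  show ?thesis using spec_det[OF U(1,3)] U(4) by (simp add: prod_pos)
qed

lemma kron_psd:
  fixes A X :: "real^'n^'n"
  assumes "posdef A"
  shows "0 \<le> X \<bullet> (A ** X ** A)"
proof -
  obtain U :: "real^'n^'n" and d :: "'n \<Rightarrow> real" where U: "transpose U ** U = mat 1" "U ** transpose U = mat 1"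
    "A = U ** diagm d ** transpose U" "\<And>i. d i > 0"
    using posdef_spec[OF assms] by blast
  define Y where "Y = transpose U ** X ** U"
  have "A ** X ** A = U ** (diagm d ** Y ** diagm d ** transpose U)"
    unfolding U(3) Y_def by (simp add: matrix_mul_assoc)
  then have "X \<bullet> (A ** X ** A) = (transpose U ** X) \<bullet> (diagm d ** Y ** diagm d ** transpose U)"
    by (simp add: inner_mm)
  also have "\<dots> = (transpose U ** X ** U) \<bullet> (diagm d ** Y ** diagm d)"
    by (subst inner_mm2) simp
  also have "\<dots> = (\<Sum>i\<in>UNIV. \<Sum>j\<in>UNIV. Y$i$j * (d i * Y$i$j * d j))"
    unfolding Y_def[symmetric] by (simp add: mat_inner diagm_mult_left diagm_mult_right)
  also have "\<dots> \<ge> 0"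
  proof (intro sum_nonneg)
    fix i j
    have "Y$i$j * (d i * Y$i$j * d j) = (d i * d j) * (Y$i$j)^2" by (simp add: power2_eq_square mult_ac)
    also have "\<dots> \<ge> 0" using U(4)[of i] U(4)[of j] by simp
    finally show "0 \<le> Y$i$j * (d i * Y$i$j * d j)" .
  qed
  finally show ?thesis .
qed

lemma posdef_invertible:
  fixes X :: "real^'n^'n"
  assumes "posdef X" shows "invertible X"
proof -
  obtain a where "a > 0" "qlb a X" using posdef_qlb[OF assms] by blast
  then show ?thesis using posdef_inv(1)[OF assms] by blast
qed

lemma posdef_inv_sym:
  fixes X :: "real^'n^'n"
  assumes "posdef X" shows "transpose (matrix_inv X) = matrix_inv X" "posdef (matrix_inv X)"
proof -
  obtain a where "a > 0" "qlb a X" using posdef_qlb[OF assms] by blast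
  then show "transpose (matrix_inv X) = matrix_inv X" "posdef (matrix_inv X)"
    using posdef_inv(2,3)[OF assms] by blast+
qed

lemma ldz:
  fixes Z :: "real^'n^'n"
  assumes "posdef Z"
  shows "ln (det Z) \<le> trace Z - real CARD('n)"
proof -
  obtain U :: "real^'n^'n" and d :: "'n \<Rightarrow> real" where U: "transpose U ** U = mat 1" "U ** transpose U = mat 1"
    "Z = U ** diagm d ** transpose U" "\<And>i. d i > 0"
    using posdef_spec[OF assms] by blast
  have "ln (det Z) = (\<Sum>i\<in>UNIV. ln (d i))"
  proof -
    have "d i \<noteq> 0" for i using U(4)[of i] by simp
    then show ?thesis unfolding spec_det[OF U(1,3)] by (simp add: ln_prod)
  qed
  also have "\<dots> \<le> (\<Sum>i\<in>UNIV. d i - 1)"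
    by (intro sum_mono ln_le_minus_one U(4))
  also have "\<dots> = trace Z - real CARD('n)"
    unfolding spec_trace[OF U(1,3)] by (simp add: sum_subtractf)
  finally show ?thesis .
qed

lemma logdet_conc:
  fixes L P :: "real^'n^'n"
  assumes L: "posdef L" and P: "posdef P"
  shows "ln (det P) \<le> ln (det L) + trace (matrix_inv L ** (P - L))"
proof -
  obtain U :: "real^'n^'n" and d :: "'n \<Rightarrow> real" where U: "transpose U ** U = mat 1" "U ** transpose U = mat 1"
    "L = U ** diagm d ** transpose U" "\<And>i. d i > 0"
    using posdef_spec[OF L] by blast
  define Dm where "Dm = diagm (\<lambda>i. 1 / sqrt (d i))"
  define Ds where "Ds = diagm (\<lambda>i. sqrt (d i))"
  define W where "W = Dm ** transpose U"
  have Wt: "transpose W = U ** Dm" unfolding W_def Dm_def by (simp add: matrix_transpose_mul)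
  have DmD: "Dm ** diagm d ** Dm = mat 1"
  proof -
    have "Dm ** diagm d ** Dm = diagm (\<lambda>i. 1 / sqrt (d i) * d i * (1 / sqrt (d i)))"
      unfolding Dm_def by (simp add: diagm_mult)
    also have "(\<lambda>i. 1 / sqrt (d i) * d i * (1 / sqrt (d i))) = (\<lambda>i. 1)"
    proof
      fix i have "sqrt (d i) * sqrt (d i) = d i" using U(4)[of i] by simp
      then show "1 / sqrt (d i) * d i * (1 / sqrt (d i)) = 1" using U(4)[of i]
        by (metis divide_self_if less_irrefl real_sqrt_eq_zero_cancel_iff times_divide_times_eq mult_1 div_by_1 mult.commute)
    qed
    also have "diagm (\<lambda>i. 1) = mat 1" by (simp add: diagm_def mat_def)
    finally show ?thesis .
  qed
  have DmDm: "Dm ** Dm = diagm (\<lambda>i. 1 / d i)"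
  proof -
    have "Dm ** Dm = diagm (\<lambda>i. 1 / sqrt (d i) * (1 / sqrt (d i)))" unfolding Dm_def by (simp add: diagm_mult)
    also have "(\<lambda>i. 1 / sqrt (d i) * (1 / sqrt (d i))) = (\<lambda>i. 1 / d i)"
    proof
      fix i have "sqrt (d i) * sqrt (d i) = d i" using U(4)[of i] by simp
      then show "1 / sqrt (d i) * (1 / sqrt (d i)) = 1 / d i" by simp
    qed
    finally show ?thesis .
  qed
  have DsDm: "Ds ** Dm = mat 1"
  proof -
    have "Ds ** Dm = diagm (\<lambda>i. sqrt (d i) * (1 / sqrt (d i)))" unfolding Ds_def Dm_def by (simp add: diagm_mult)
    also have "(\<lambda>i. sqrt (d i) * (1 / sqrt (d i))) = (\<lambda>i. 1)"
    proof
      fix i show "sqrt (d i) * (1 / sqrt (d i)) = 1" using U(4)[of i] by simp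
    qed
    also have "diagm (\<lambda>i. 1) = mat 1" by (simp add: diagm_def mat_def)
    finally show ?thesis .
  qed
  have WLW: "W ** L ** transpose W = mat 1"
  proof -
    have "W ** L ** transpose W = Dm ** (transpose U ** U) ** diagm d ** (transpose U ** U) ** Dm"
      unfolding Wt unfolding W_def U(3) by (simp add: matrix_mul_assoc)
    also have "\<dots> = mat 1" using DmD by (simp add: U(1))
    finally show ?thesis .
  qed
  have detW: "det W * det W * det L = 1"
  proof -
    have "det (W ** L ** transpose W) = 1" using WLW by simp
    then show ?thesis by (simp add: det_mul mult_ac)
  qed
  define Z where "Z = W ** P ** transpose W"
  have detZ: "det Z = det P / det L"
  proof -
    have "det Z = det W * det W * det P" unfolding Z_def by (simp add: det_mul mult_ac)
    moreover have "det L > 0" by (rule posdef_det_pos[OF L])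
    ultimately show ?thesis using detW by (simp add: field_simps)
  qed
  have WtW: "transpose W ** W = matrix_inv L"
  proof -
    have "transpose W ** W = U ** (Dm ** Dm) ** transpose U"
      unfolding Wt unfolding W_def by (simp add: matrix_mul_assoc)
    also have "\<dots> = matrix_inv L" unfolding DmDm
      by (rule spec_inv(2)[OF U(1-3), symmetric]) (use U(4) in \<open>simp add: less_imp_neq[symmetric]\<close>)
    finally show ?thesis .
  qed
  have trZ: "trace Z = trace (matrix_inv L ** P)"
  proof -
    have "trace Z = trace ((W ** P) ** transpose W)" unfolding Z_def ..
    also have "\<dots> = trace (transpose W ** (W ** P))" by (rule trace_cyc)
    also have "\<dots> = trace (matrix_inv L ** P)" by (simp add: matrix_mul_assoc WtW)
    finally show ?thesis .
  qed
  have left: "(Ds ** transpose U) ** transpose W = mat 1"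
  proof -
    have "(Ds ** transpose U) ** transpose W = Ds ** (transpose U ** U) ** Dm"
      unfolding Wt by (simp add: matrix_mul_assoc)
    also have "\<dots> = mat 1" using DsDm by (simp add: U(1))
    finally show ?thesis .
  qed
  have Zpd: "posdef Z"
    unfolding posdef_def symmetric_mat_def
  proof (intro conjI allI impI)
    show "transpose Z = Z" unfolding Z_def
      using posdef_sym[OF P] by (simp add: matrix_transpose_mul matrix_mul_assoc)
    fix x :: "real^'n" assume x: "x \<noteq> 0"
    have nz: "transpose W *v x \<noteq> 0"
    proof
      assume "transpose W *v x = 0"
      then have "(Ds ** transpose U) *v (transpose W *v x) = 0" by simp
      then have "x = 0" by (simp only: matrix_vector_mul_assoc left matrix_vector_mul_lid)
      then show False using x by simp
    qed
    have "x \<bullet> (Z *v x) = x \<bullet> (W *v (P *v (transpose W *v x)))"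
      unfolding Z_def by (simp only: matrix_vector_mul_assoc matrix_mul_assoc)
    also have "\<dots> = (transpose W *v x) \<bullet> (P *v (transpose W *v x))" by (rule inner_vec_mat)
    finally show "0 < x \<bullet> (Z *v x)" using P nz unfolding posdef_def by simp
  qed
  have dLpos: "det L > 0" by (rule posdef_det_pos[OF L])
  have dPpos: "det P > 0" by (rule posdef_det_pos[OF P])
  have "ln (det P) - ln (det L) = ln (det Z)" unfolding detZ using dLpos dPpos by (simp add: ln_div)
  also have "\<dots> \<le> trace Z - real CARD('n)" by (rule ldz[OF Zpd])
  also have "\<dots> = trace (matrix_inv L ** (P - L))"
    unfolding trZ mm_diff_l trace_sub
    using inv_mat(2)[OF posdef_invertible[OF L]] by (simp add: trace_I)
  finally show ?thesis by simp
qed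

lemma ln_recip_bound:
  fixes a t :: real
  assumes "a > 0" "t > 0"
  shows "ln a + 1 \<le> ln t + a / t"
proof -
  have "ln (a / t) \<le> a / t - 1" using assms by (intro ln_le_minus_one) simp
  then show ?thesis using assms by (simp add: ln_div)
qed

lemma trace_inv_S:
  fixes X S U :: "real^'n^'n"
  assumes UtU: "transpose U ** U = mat 1" and UUt: "U ** transpose U = mat 1"
    and X: "X = U ** diagm d ** transpose U" and dpos: "\<And>i. d i > 0"
    and qS: "qlb s S"
  shows "trace (matrix_inv X ** S) \<ge> (\<Sum>i\<in>UNIV. s / d i)"
proof -
  have nz: "d i \<noteq> 0" for i using dpos[of i] by simp
  have "trace (matrix_inv X ** S) = trace (U ** (diagm (\<lambda>i. 1 / d i) ** transpose U ** S))"
    unfolding spec_inv(2)[OF UtU UUt X nz] by (simp add: matrix_mul_assoc)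
  also have "\<dots> = trace (diagm (\<lambda>i. 1 / d i) ** transpose U ** S ** U)" by (subst trace_cyc) (simp add: matrix_mul_assoc)
  also have "\<dots> = (\<Sum>i\<in>UNIV. (1 / d i) * (transpose U ** S ** U) $ i $ i)"
    by (simp add: trace_def matrix_mul_assoc[symmetric] diagm_mult_left)
  also have "\<dots> \<ge> (\<Sum>i\<in>UNIV. (1 / d i) * s)"
  proof (rule sum_mono)
    fix i
    have "(transpose U ** S ** U) $ i $ i = axis i 1 \<bullet> ((transpose U ** S ** U) *v axis i 1)"
      by (rule axis_quad[symmetric])
    also have "\<dots> = axis i 1 \<bullet> (transpose U *v (S *v (U *v axis i 1)))"
      by (simp only: matrix_vector_mul_assoc matrix_mul_assoc)
    also have "\<dots> = (U *v axis i 1) \<bullet> (S *v (U *v axis i 1))"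
      using inner_vec_mat[of "axis i 1" "transpose U" "S *v (U *v axis i 1)"] by (simp add: inner_commute)
    also have "\<dots> \<ge> s * ((U *v axis i 1) \<bullet> (U *v axis i 1))" using qS unfolding qlb_def by blast
    finally have "s \<le> (transpose U ** S ** U) $ i $ i" using unit_col[OF UtU] by simp
    then show "(1 / d i) * s \<le> (1 / d i) * (transpose U ** S ** U) $ i $ i"
      using dpos[of i] by (intro mult_left_mono) simp_all
  qed
  finally show ?thesis by simp
qed

lemma coercive:
  fixes S :: "real^'n^'n"
  assumes S: "posdef S"
  obtains a b where "a > 0" "\<And>X. posdef X \<Longrightarrow> ln (det X) + trace (matrix_inv X ** S) \<le> c \<Longrightarrow>
      qlb a X \<and> (\<forall>x. x \<bullet> (X *v x) \<le> b * (x \<bullet> x))"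
proof -
  obtain s where s: "s > 0" "qlb s S" using posdef_qlb[OF S] by blast
  define g0 where "g0 = ln s + 1"
  define C1 where "C1 = c + real CARD('n) * \<bar>g0\<bar>"
  define K where "K = C1 - ln (s/2) - 1"
  define a where "a = s / (2 * max 1 K)"
  define b where "b = exp C1"
  have apos: "a > 0" unfolding a_def using s by simp
  have main: "qlb a X \<and> (\<forall>x. x \<bullet> (X *v x) \<le> b * (x \<bullet> x))"
    if X: "posdef X" and hX: "ln (det X) + trace (matrix_inv X ** S) \<le> c" for X
  proof -
    obtain U :: "real^'n^'n" and d :: "'n \<Rightarrow> real" where U: "transpose U ** U = mat 1" "U ** transpose U = mat 1"
      "X = U ** diagm d ** transpose U" "\<And>i. d i > 0"
      using posdef_spec[OF X] by blast
    define g where "g i = ln (d i) + s / d i" for i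
    have gl: "g0 \<le> g i" for i unfolding g_def g0_def using ln_recip_bound[OF s(1) U(4)] .
    have nz: "d i \<noteq> 0" for i using U(4)[of i] by simp
    have "ln (det X) = (\<Sum>i\<in>UNIV. ln (d i))"
      unfolding spec_det[OF U(1,3)] using nz by (simp add: ln_prod)
    then have sumg: "(\<Sum>i\<in>UNIV. g i) \<le> c"
      using hX trace_inv_S[OF U s(2)] unfolding g_def by (simp add: sum.distrib)
    have gi: "g i \<le> C1" for i
    proof -
      have "(\<Sum>j\<in>UNIV. g j) = g i + (\<Sum>j\<in>UNIV - {i}. g j)"
        by (simp add: sum.remove)
      moreover have "(\<Sum>j\<in>UNIV - {i}. g j) \<ge> real (card (UNIV - {i})) * (- \<bar>g0\<bar>)"
        using gl by (intro sum_bounded_below) (smt (verit))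
      moreover have "real (card (UNIV - {i})) \<le> real CARD('n)"
        by (simp add: card_mono)
      ultimately have "g i \<le> c + real (card (UNIV - {i})) * \<bar>g0\<bar>" using sumg by simp
      also have "\<dots> \<le> C1" unfolding C1_def
        using \<open>real (card (UNIV - {i})) \<le> real CARD('n)\<close> by (simp add: mult_right_mono)
      finally show ?thesis .
    qed
    have dub: "d i \<le> b" for i
    proof -
      have "ln (d i) \<le> C1" using gi[of i] s(1) U(4)[of i] unfolding g_def
        by (smt (verit) divide_pos_pos)
      then show ?thesis unfolding b_def using U(4)[of i] by (metis exp_le_cancel_iff exp_ln)
    qed
    have dlb: "a \<le> d i" for i
    proof -
      have h2: "ln (s/2) + 1 \<le> ln (d i) + (s/2) / d i" using ln_recip_bound[of "s/2" "d i"] s(1) U(4)[of i] by simp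
      have "s / d i = (s/2) / d i + (s/2) / d i" by simp
      then have "(s/2) / d i \<le> K" using gi[of i] h2 unfolding K_def g_def by linarith
      then have "(s/2) / d i \<le> max 1 K" by simp
      then have "s / 2 \<le> max 1 K * d i" using U(4)[of i] by (simp add: divide_le_eq)
      then show ?thesis unfolding a_def using U(4)[of i] by (simp add: divide_le_eq mult.commute)
    qed
    have "qlb a X" unfolding qlb_def
    proof
      fix x show "a * (x \<bullet> x) \<le> x \<bullet> (X *v x)" by (rule spec_lb[OF U(1-3) dlb])
    qed
    moreover have "\<forall>x. x \<bullet> (X *v x) \<le> b * (x \<bullet> x)"
    proof
      fix x show "x \<bullet> (X *v x) \<le> b * (x \<bullet> x)" by (rule spec_ub[OF U(1-3) dub])
    qed
    ultimately show ?thesis by blast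
  qed
  show ?thesis by (rule that[OF apos main])
qed

lemma tendsto_det:
  fixes X :: "'a \<Rightarrow> real^'n^'n"
  assumes "(X \<longlongrightarrow> L) F"
  shows "((\<lambda>x. det (X x)) \<longlongrightarrow> det L) F"
  unfolding det_def by (intro tendsto_intros assms)

lemma tendsto_trace:
  fixes X :: "'a \<Rightarrow> real^'n^'n"
  assumes "(X \<longlongrightarrow> L) F"
  shows "((\<lambda>x. trace (X x)) \<longlongrightarrow> trace L) F"
  unfolding trace_def by (intro tendsto_intros assms)

lemma inv_diff:
  fixes X L :: "real^'n^'n"
  assumes "invertible X" "invertible L"
  shows "matrix_inv X - matrix_inv L = matrix_inv X ** (L - X) ** matrix_inv L"
proof -
  have "matrix_inv X ** (L - X) ** matrix_inv L
      = matrix_inv X ** (L ** matrix_inv L) - (matrix_inv X ** X) ** matrix_inv L"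
    by (simp add: mm_diff_l mm_diff_r matrix_mul_assoc)
  also have "\<dots> = matrix_inv X - matrix_inv L" by (simp add: inv_mat assms)
  finally show ?thesis by simp
qed

lemma qlb_perturb:
  fixes X L :: "real^'n^'n"
  assumes "qlb a L" "norm (X - L) \<le> a / 2"
  shows "qlb (a/2) X"
  unfolding qlb_def
proof
  fix x :: "real^'n"
  have "x \<bullet> (X *v x) = x \<bullet> (L *v x) + x \<bullet> ((X - L) *v x)"
    by (simp add: matrix_vector_mult_diff_rdistrib inner_diff_right)
  moreover have "\<bar>x \<bullet> ((X - L) *v x)\<bar> \<le> norm (X - L) * (x \<bullet> x)" by (rule quad_norm)
  moreover have "norm (X - L) * (x \<bullet> x) \<le> a / 2 * (x \<bullet> x)" using assms(2) by (intro mult_right_mono) simp_all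
  moreover have "a * (x \<bullet> x) \<le> x \<bullet> (L *v x)" using assms(1) unfolding qlb_def by blast
  ultimately show "a / 2 * (x \<bullet> x) \<le> x \<bullet> (X *v x)" by linarith
qed

lemma inv_cont:
  fixes X :: "'a \<Rightarrow> real^'n^'n"
  assumes lim: "(X \<longlongrightarrow> L) F" and L: "posdef L" and sym: "eventually (\<lambda>x. transpose (X x) = X x) F"
  shows "eventually (\<lambda>x. posdef (X x)) F" "((\<lambda>x. matrix_inv (X x)) \<longlongrightarrow> matrix_inv L) F"
proof -
  obtain a where a: "a > 0" "qlb a L" using posdef_qlb[OF L] by blast
  have "eventually (\<lambda>x. dist (X x) L < a / 2) F" using lim a(1) unfolding tendsto_iff by (meson half_gt_zero)
  then have ev: "eventually (\<lambda>x. norm (X x - L) \<le> a / 2) F"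
    by eventually_elim (simp add: dist_norm)
  have evq: "eventually (\<lambda>x. qlb (a/2) (X x) \<and> posdef (X x)) F"
    using ev sym
  proof eventually_elim
    case (elim x)
    then have "qlb (a/2) (X x)" using qlb_perturb[OF a(2)] by blast
    moreover have "posdef (X x)" by (rule qlb_posdef[OF elim(2) _ calculation]) (use a in simp)
    ultimately show ?case by blast
  qed
  then show "eventually (\<lambda>x. posdef (X x)) F" by (rule eventually_mono) blast
  define C where "C = real (CARD('n))^2 * (1 / (a/2)) * norm (matrix_inv L)"
  have "((\<lambda>x. matrix_inv (X x) - matrix_inv L) \<longlongrightarrow> 0) F"
  proof (rule Lim_null_comparison)
    show "eventually (\<lambda>x. norm (matrix_inv (X x) - matrix_inv L) \<le> C * norm (X x - L)) F"
      using evq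
    proof eventually_elim
      case (elim x)
      have iX: "invertible (X x)" using posdef_inv(1)[of "X x" "a/2"] elim a by simp
      have iL: "invertible L" using posdef_inv(1)[OF L a(2) a(1)] .
      have nX: "norm (matrix_inv (X x)) \<le> real (CARD('n))^2 * (1 / (a/2))"
        using posdef_inv(5)[of "X x" "a/2"] elim a by simp
      have "norm (matrix_inv (X x) - matrix_inv L) = norm (matrix_inv (X x) ** (L - X x) ** matrix_inv L)"
        by (simp add: inv_diff iX iL)
      also have "\<dots> \<le> norm (matrix_inv (X x)) * norm (L - X x) * norm (matrix_inv L)"
        by (meson mm_norm mult_right_mono norm_ge_zero order_trans)
      also have "\<dots> \<le> real (CARD('n))^2 * (1 / (a/2)) * norm (L - X x) * norm (matrix_inv L)"
        by (intro mult_right_mono nX) simp_all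
      also have "\<dots> = C * norm (X x - L)" unfolding C_def by (simp add: norm_minus_commute)
      finally show ?case .
    qed
    have "((\<lambda>x. X x - L) \<longlongrightarrow> 0) F" using lim by (rule LIM_zero)
    then have "((\<lambda>x. norm (X x - L)) \<longlongrightarrow> 0) F" by (rule tendsto_norm_zero)
    then show "((\<lambda>x. C * norm (X x - L)) \<longlongrightarrow> 0) F" using tendsto_mult_right_zero by blast
  qed
  then show "((\<lambda>x. matrix_inv (X x)) \<longlongrightarrow> matrix_inv L) F" by (rule LIM_zero_cancel)
qed

definition hr :: "real \<Rightarrow> nat \<Rightarrow> real^'n^'n \<Rightarrow> real^'n^'n \<Rightarrow> real" where
  "hr \<rho> k S X = ln (det X) + trace (matrix_inv X ** S) + \<rho> / 2 * (infdist X (sparse_set k))\<^sup>2"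

lemma h_rho_hr: "posdef X \<Longrightarrow> h_rho \<rho> k S X = ereal (hr \<rho> k S X)"
  by (simp add: h_rho_def hr_def)

lemma hr_cont:
  fixes X :: "'a \<Rightarrow> real^'n^'n"
  assumes lim: "(X \<longlongrightarrow> L) F" and L: "posdef L" and sym: "eventually (\<lambda>x. transpose (X x) = X x) F"
  shows "((\<lambda>x. hr \<rho> k S (X x)) \<longlongrightarrow> hr \<rho> k S L) F"
  unfolding hr_def
proof (intro tendsto_intros tendsto_det tendsto_trace lim)
  show "det L \<noteq> 0" using posdef_det_pos[OF L] by simp
  show "((\<lambda>x. matrix_inv (X x) ** S) \<longlongrightarrow> matrix_inv L ** S) F"
    by (rule tendsto_mm[OF inv_cont(2)[OF lim L sym] tendsto_const])
qed

lemma zero_sparse: "(0::real^'n^'n) \<in> sparse_set k"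
  by (simp add: sparse_set_def symmetric_mat_def nnz_def transpose_def vec_eq_iff)

lemma tendsto_transpose:
  fixes X :: "'a \<Rightarrow> real^'n^'n"
  assumes "(X \<longlongrightarrow> L) F"
  shows "((\<lambda>x. transpose (X x)) \<longlongrightarrow> transpose L) F"
  unfolding transpose_def by (intro tendsto_intros assms)

lemma closed_sparse: "closed (sparse_set k :: (real^'n^'n) set)"
  unfolding closed_sequential_limits
proof (intro allI impI, elim conjE)
  fix x :: "nat \<Rightarrow> real^'n^'n" and l
  assume xs: "\<forall>n. x n \<in> sparse_set k" and lim: "x \<longlonglongrightarrow> l"
  have "(\<lambda>n. transpose (x n)) \<longlonglongrightarrow> transpose l" by (rule tendsto_transpose[OF lim])
  moreover have "(\<lambda>n. transpose (x n)) = x" using xs by (simp add: sparse_set_def symmetric_mat_def)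
  ultimately have "transpose l = l" using lim LIMSEQ_unique by metis
  then have syml: "symmetric_mat l" by (simp add: symmetric_mat_def)
  define N where "N = {(i, j). l $ i $ j \<noteq> 0}"
  have finN: "finite N" by simp
  have "\<forall>p\<in>N. eventually (\<lambda>n. x n $ fst p $ snd p \<noteq> 0) sequentially"
  proof
    fix p assume "p \<in> N"
    then have ne: "l $ fst p $ snd p \<noteq> 0" unfolding N_def by auto
    have "(\<lambda>n. x n $ fst p $ snd p) \<longlonglongrightarrow> l $ fst p $ snd p" by (intro tendsto_intros lim)
    then show "eventually (\<lambda>n. x n $ fst p $ snd p \<noteq> 0) sequentially"
      using ne by (rule tendsto_imp_eventually_ne)
  qed
  then have "eventually (\<lambda>n. \<forall>p\<in>N. x n $ fst p $ snd p \<noteq> 0) sequentially"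
    by (rule eventually_ball_finite[OF finN])
  then obtain n where n: "\<forall>p\<in>N. x n $ fst p $ snd p \<noteq> 0" using eventually_sequentially by auto
  have "N \<subseteq> {(i, j). x n $ i $ j \<noteq> 0}" using n by auto
  then have "card N \<le> nnz (x n)" unfolding nnz_def by (intro card_mono) simp_all
  also have "\<dots> \<le> 2 * k + CARD('n)" using xs by (simp add: sparse_set_def)
  finally show "l \<in> sparse_set k" using syml unfolding sparse_set_def nnz_def N_def by simp
qed

lemma proj_infdist:
  assumes "T \<in> proj_set C X"
  shows "infdist X C = dist X T"
proof -
  have TC: "T \<in> C" and min: "\<And>A. A \<in> C \<Longrightarrow> dist X T \<le> dist X A" using assms by (auto simp: proj_set_def)
  have ne: "C \<noteq> {}" using TC by auto
  have "infdist X C \<le> dist X T" by (rule infdist_le[OF TC])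
  moreover have "dist X T \<le> infdist X C"
    unfolding infdist_notempty[OF ne] using ne by (auto intro: cINF_greatest min)
  ultimately show ?thesis by simp
qed

lemma norm_sq_inner_mat: "(norm (A::real^'n^'n))^2 = A \<bullet> A"
  by (rule power2_norm_eq_inner)

lemma upper_step:
  fixes L P T v S :: "real^'n^'n"
  assumes L: "posdef L" and P: "posdef P" and T: "T \<in> proj_set (sparse_set k) L"
    and Pe: "P = L + e *\<^sub>R v" and rho: "\<rho> > 0"
  shows "hr \<rho> k S P - hr \<rho> k S L \<le> e * (trace (matrix_inv L ** v) - trace (matrix_inv P ** v ** matrix_inv L ** S)
            + \<rho> * ((L - T) \<bullet> v) + \<rho> / 2 * e * (v \<bullet> v))"
proof -
  let ?C = "sparse_set k :: (real^'n^'n) set"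
  have TC: "T \<in> ?C" using T by (simp add: proj_set_def)
  have i1: "ln (det P) \<le> ln (det L) + e * trace (matrix_inv L ** v)"
    using logdet_conc[OF L P] unfolding Pe by (simp add: mm_scale_r trace_scaleR)
  have iP: "invertible P" by (rule posdef_invertible[OF P])
  have iL: "invertible L" by (rule posdef_invertible[OF L])
  have i2: "trace (matrix_inv P ** S) - trace (matrix_inv L ** S) = - e * trace (matrix_inv P ** v ** matrix_inv L ** S)"
  proof -
    have "trace (matrix_inv P ** S) - trace (matrix_inv L ** S) = trace ((matrix_inv P - matrix_inv L) ** S)"
      by (simp add: mm_diff_r trace_sub)
    also have "matrix_inv P - matrix_inv L = matrix_inv P ** (L - P) ** matrix_inv L" by (rule inv_diff[OF iP iL])
    also have "L - P = (- e) *\<^sub>R v" unfolding Pe by simp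
    finally have "trace (matrix_inv P ** S) - trace (matrix_inv L ** S) = trace (matrix_inv P ** ((- e) *\<^sub>R v) ** matrix_inv L ** S)" .
    then show ?thesis by (simp only: mm_scale_r mm_scale_l trace_scaleR)
  qed
  have d0: "infdist L ?C = norm (L - T)" using proj_infdist[OF T] by (simp add: dist_norm)
  have "infdist P ?C \<le> dist P T" by (rule infdist_le[OF TC])
  then have "(infdist P ?C)^2 \<le> (norm (P - T))^2" by (simp add: dist_norm power_mono infdist_nonneg)
  also have "P - T = (L - T) + e *\<^sub>R v" unfolding Pe by simp
  also have "(norm ((L - T) + e *\<^sub>R v))^2 = (norm (L - T))^2 + 2 * e * ((L - T) \<bullet> v) + e^2 * (v \<bullet> v)"
    unfolding norm_sq_inner_mat by (simp add: inner_add_left inner_add_right inner_commute power2_eq_square algebra_simps)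
  finally have i3: "(infdist P ?C)^2 \<le> (infdist L ?C)^2 + 2 * e * ((L - T) \<bullet> v) + e^2 * (v \<bullet> v)"
    unfolding d0 .
  have "hr \<rho> k S P - hr \<rho> k S L = (ln (det P) - ln (det L)) + (trace (matrix_inv P ** S) - trace (matrix_inv L ** S))
      + \<rho> / 2 * ((infdist P ?C)^2 - (infdist L ?C)^2)"
    unfolding hr_def by (simp add: algebra_simps)
  also have "\<dots> \<le> e * trace (matrix_inv L ** v) + (- e * trace (matrix_inv P ** v ** matrix_inv L ** S))
      + \<rho> / 2 * (2 * e * ((L - T) \<bullet> v) + e^2 * (v \<bullet> v))"
    using i1 i2 i3 rho by (intro add_mono mult_left_mono) auto
  also have "\<dots> = e * (trace (matrix_inv L ** v) - trace (matrix_inv P ** v ** matrix_inv L ** S)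
            + \<rho> * ((L - T) \<bullet> v) + \<rho> / 2 * e * (v \<bullet> v))"
    by (simp add: algebra_simps power2_eq_square)
  finally show ?thesis .
qed

lemma v_zero:
  fixes L T v S :: "real^'n^'n"
  assumes L: "posdef L" and vsym: "transpose v = v" and rho: "\<rho> > 0"
    and T: "T \<in> proj_set (sparse_set k) L" and Ssym: "transpose S = S"
    and G: "matrix_inv L - matrix_inv L ** S ** matrix_inv L + \<rho> *\<^sub>R (L - T)
            = - (\<rho> *\<^sub>R v + matrix_inv L ** v ** matrix_inv L)"
    and mini: "\<And>e. 0 < e \<Longrightarrow> e \<le> 1 \<Longrightarrow> posdef (L + e *\<^sub>R v) \<Longrightarrow> hr \<rho> k S L \<le> hr \<rho> k S (L + e *\<^sub>R v)"
  shows "v = 0"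
proof (rule ccontr)
  assume vne: "v \<noteq> 0"
  define Li where "Li = matrix_inv L"
  have Lisym: "transpose Li = Li" and Lipd: "posdef Li" unfolding Li_def using posdef_inv_sym[OF L] by auto
  have Lsym: "transpose L = L" by (rule posdef_sym[OF L])
  define F where "F = at_right (0::real)"
  define P where "P e = L + e *\<^sub>R v" for e :: real
  define \<beta> where "\<beta> e = trace (Li ** v) - trace (matrix_inv (P e) ** v ** Li ** S)
            + \<rho> * ((L - T) \<bullet> v) + \<rho> / 2 * e * (v \<bullet> v)" for e
  define \<beta>0 where "\<beta>0 = trace (Li ** v) - trace (Li ** v ** Li ** S) + \<rho> * ((L - T) \<bullet> v)"
  have Plim: "(P \<longlongrightarrow> L) F"
  proof -
    have "((\<lambda>e. L + e *\<^sub>R v) \<longlongrightarrow> L + 0 *\<^sub>R v) F"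
      unfolding F_def by (intro tendsto_intros)
    then show ?thesis unfolding P_def by simp
  qed
  have Psym: "eventually (\<lambda>e. transpose (P e) = P e) F"
    unfolding P_def by (simp add: transpose_add transpose_scale Lsym vsym)
  note IC = inv_cont[OF Plim L Psym]
  have blim: "(\<beta> \<longlongrightarrow> \<beta>0) F"
  proof -
    have "((\<lambda>e. trace (Li ** v) - trace (matrix_inv (P e) ** v ** Li ** S)
            + \<rho> * ((L - T) \<bullet> v) + \<rho> / 2 * e * (v \<bullet> v)) \<longlongrightarrow>
          trace (Li ** v) - trace (Li ** v ** Li ** S) + \<rho> * ((L - T) \<bullet> v) + \<rho> / 2 * 0 * (v \<bullet> v)) F"
      unfolding F_def
      by (intro tendsto_intros tendsto_trace tendsto_mm IC(2)[unfolded F_def, folded Li_def])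
    then show ?thesis unfolding \<beta>_def \<beta>0_def by simp
  qed
  have t1: "trace (Li ** v) = Li \<bullet> v" using trace_inner[of Li v] Lisym by simp
  have t2: "trace (Li ** v ** Li ** S) = (Li ** S ** Li) \<bullet> v"
  proof -
    have "trace (Li ** v ** Li ** S) = trace ((Li ** v) ** (Li ** S))" by (simp add: matrix_mul_assoc)
    also have "\<dots> = trace ((Li ** S) ** (Li ** v))" by (rule trace_cyc)
    also have "\<dots> = trace (transpose (Li ** S ** Li) ** v)"
      by (simp add: matrix_transpose_mul Lisym Ssym matrix_mul_assoc)
    finally show ?thesis by (simp add: trace_inner)
  qed
  have "\<beta>0 = (Li - Li ** S ** Li + \<rho> *\<^sub>R (L - T)) \<bullet> v"
    unfolding \<beta>0_def t1 t2 by (simp add: inner_diff_left inner_add_left)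
  also have "\<dots> = - (\<rho> * (v \<bullet> v) + v \<bullet> (Li ** v ** Li))"
    using G unfolding Li_def[symmetric] by (simp add: inner_add_left inner_commute inner_diff_right)
  finally have b0: "\<beta>0 = - (\<rho> * (v \<bullet> v) + v \<bullet> (Li ** v ** Li))" .
  have "v \<bullet> v > 0" using vne by simp
  moreover have "v \<bullet> (Li ** v ** Li) \<ge> 0" by (rule kron_psd[OF Lipd])
  ultimately have b0neg: "\<beta>0 < 0" unfolding b0 using rho by (smt (verit) mult_pos_pos)
  have ev: "eventually (\<lambda>e. e \<in> {0<..<1} \<and> posdef (P e) \<and> \<beta> e < 0) F"
  proof -
    have e1: "eventually (\<lambda>e. e \<in> {0<..<1}) F" unfolding F_def by (rule eventually_at_right_real) simp
    have e3: "eventually (\<lambda>e. \<beta> e < 0) F" using order_tendstoD(2)[OF blim b0neg] .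
    show ?thesis using e1 IC(1) e3 by eventually_elim blast
  qed
  have "F \<noteq> bot" unfolding F_def by simp
  then obtain e where e: "e \<in> {0<..<1}" "posdef (P e)" "\<beta> e < 0"
    using eventually_happens[OF ev] by blast
  have "hr \<rho> k S (P e) - hr \<rho> k S L \<le> e * \<beta> e"
    unfolding \<beta>_def Li_def by (rule upper_step[OF L e(2) T P_def rho])
  also have "\<dots> < 0" using e by (simp add: mult_pos_neg)
  finally have "hr \<rho> k S (P e) < hr \<rho> k S L" by simp
  moreover have "hr \<rho> k S L \<le> hr \<rho> k S (P e)" unfolding P_def
    using mini[of e] e unfolding P_def by simp
  ultimately show False by simp
qed

lemma S_posdef:
  fixes S :: "real^'n^'n"
  assumes "psd S" "invertible S"
  shows "posdef S"
proof -
  have sym: "transpose S = S" using assms(1) by (simp add: psd_def symmetric_mat_def)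
  obtain U :: "real^'n^'n" and d :: "'n \<Rightarrow> real" where U: "transpose U ** U = mat 1" "U ** transpose U = mat 1"
    "S = U ** diagm d ** transpose U"
    using spectral[OF sym] by blast
  have dnn: "d i \<ge> 0" for i using spec_eig(1)[OF U, of i] assms(1) unfolding psd_def by metis
  have "det S \<noteq> 0" using assms(2) by (simp add: invertible_det_nz)
  then have "(\<Prod>i\<in>UNIV. d i) \<noteq> 0" using spec_det[OF U(1,3)] by simp
  then have dnz: "d i \<noteq> 0" for i by (simp add: prod_zero_iff)
  have dpos: "d i > 0" for i using dnn[of i] dnz[of i] by simp
  define a where "a = Min (range d)"
  have apos: "a > 0" unfolding a_def using dpos by (subst Min_gr_iff) auto
  have ad: "a \<le> d i" for i unfolding a_def by (rule Min_le) auto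
  have q: "qlb a S" unfolding qlb_def
  proof
    fix x show "a * (x \<bullet> x) \<le> x \<bullet> (S *v x)" by (rule spec_lb[OF U(1-3) ad])
  qed
  show ?thesis by (rule qlb_posdef[OF sym apos q])
qed

lemma kron_eq_bound:
  fixes A X R :: "real^'n^'n"
  assumes A: "posdef A" and rho: "\<rho> > 0" and eq: "\<rho> *\<^sub>R X + A ** X ** A = R"
  shows "\<rho> * (X \<bullet> X) \<le> X \<bullet> R"
proof -
  have "X \<bullet> R = \<rho> * (X \<bullet> X) + X \<bullet> (A ** X ** A)" unfolding eq[symmetric] by (simp add: inner_add_right)
  moreover have "X \<bullet> (A ** X ** A) \<ge> 0" by (rule kron_psd[OF A])
  ultimately show ?thesis by simp
qed

lemma hat_bound:
  fixes A X R :: "real^'n^'n"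
  assumes A: "posdef A" and rho: "\<rho> > 0" and eq: "\<rho> *\<^sub>R X + A ** X ** A = R"
  shows "norm X \<le> norm R / \<rho>"
proof -
  have "\<rho> * (norm X)^2 \<le> X \<bullet> R" using kron_eq_bound[OF assms] by (simp add: power2_norm_eq_inner)
  also have "\<dots> \<le> norm X * norm R" by (rule norm_cauchy_schwarz)
  finally have h: "\<rho> * (norm X)^2 \<le> norm X * norm R" .
  show ?thesis
  proof (cases "norm X = 0")
    case True then show ?thesis using rho by simp
  next
    case False
    then have "norm X > 0" by simp
    then have "\<rho> * norm X \<le> norm R" using h by (simp add: power2_eq_square mult_le_cancel_left_pos mult.assoc[symmetric] mult.commute[of \<rho>])
    then show ?thesis using rho by (simp add: field_simps)
  qed
qed

lemma hat_sym:
  fixes A X R :: "real^'n^'n"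
  assumes A: "posdef A" and rho: "\<rho> > 0" and eq: "\<rho> *\<^sub>R X + A ** X ** A = R" and R: "transpose R = R"
  shows "transpose X = X"
proof -
  have As: "transpose A = A" by (rule posdef_sym[OF A])
  have "transpose (\<rho> *\<^sub>R X + A ** X ** A) = \<rho> *\<^sub>R transpose X + A ** transpose X ** A"
    by (simp add: transpose_add transpose_scale matrix_transpose_mul As matrix_mul_assoc)
  then have eqt: "\<rho> *\<^sub>R transpose X + A ** transpose X ** A = R" using eq R by simp
  define D where "D = X - transpose X"
  have "\<rho> *\<^sub>R D + A ** D ** A = 0"
    unfolding D_def using eq eqt by (simp add: mm_diff_l mm_diff_r algebra_simps)
  from kron_eq_bound[OF A rho this] have "\<rho> * (D \<bullet> D) \<le> 0" by simp
  then have "D \<bullet> D \<le> 0" using rho by (simp add: mult_le_0_iff)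
  then have "D = 0" by (metis inner_gt_zero_iff not_le)
  then show ?thesis unfolding D_def by simp
qed

lemma tendsto_quad:
  fixes X :: "'a \<Rightarrow> real^'n^'n"
  assumes "(X \<longlongrightarrow> L) F"
  shows "((\<lambda>n. x \<bullet> (X n *v x)) \<longlongrightarrow> x \<bullet> (L *v x)) F"
  unfolding inner_vec_def matrix_vector_mult_def by (simp, intro tendsto_intros assms)

lemma mod_id:
  fixes a b c L T v0 :: "real^'n^'n"
  shows "(a - b + \<rho> *\<^sub>R (L - T)) + (\<rho> *\<^sub>R v0 + c) = (\<rho> *\<^sub>R (L + v0) + (a + c)) - (\<rho> *\<^sub>R T + b)"
  by (simp add: scaleR_add_right scaleR_diff_right algebra_simps)

theorem theorem1:
  fixes S :: "real^'p^'p"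
    and \<rho> :: real
    and k :: nat
    and Sig Theta SigHat :: "nat \<Rightarrow> real^'p^'p"
    and eta :: "nat \<Rightarrow> real"
  assumes p2: "CARD('p) \<ge> 2"
    and S_psd: "psd S"
    and rho_pos: "\<rho> > 0"
    and k_le: "k \<le> CARD('p) choose 2"
    and Theta: "\<And>n. Theta n \<in> proj_set (sparse_set k) (Sig n)"
    and SigHat: "\<And>n. \<rho> *\<^sub>R SigHat n + matrix_inv (Sig n) ** SigHat n ** matrix_inv (Sig n)
                     = \<rho> *\<^sub>R Theta n + matrix_inv (Sig n) ** S ** matrix_inv (Sig n)"
    and eta_range: "\<And>n. eta n \<in> {0..1}"
    and eta_min: "\<And>n e. e \<in> {0..1} \<Longrightarrow>
        h_rho \<rho> k S (Sig n + eta n *\<^sub>R (SigHat n - Sig n))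
          \<le> h_rho \<rho> k S (Sig n + e *\<^sub>R (SigHat n - Sig n))"
    and step: "\<And>n. Sig (Suc n) = Sig n + eta n *\<^sub>R (SigHat n - Sig n)"
    and Sig0: "posdef (Sig 0)"
    and S_nonsing: "invertible S"
  shows "bounded (range Sig) \<and> (\<forall>n. posdef (Sig n)) \<and>
         (\<forall>L. (\<exists>r. strict_mono r \<and> (Sig \<circ> r) \<longlonglongrightarrow> L) \<longrightarrow>
              (\<exists>T \<in> proj_set (sparse_set k) L.
                 matrix_inv L - matrix_inv L ** S ** matrix_inv L + \<rho> *\<^sub>R (L - T) = 0))"
proof -
  let ?C = "sparse_set k :: (real^'p^'p) set"
  let ?h = "h_rho \<rho> k S"
  let ?H = "hr \<rho> k S"
  have Spd: "posdef S" by (rule S_posdef[OF S_psd S_nonsing])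
  have Ssym: "transpose S = S" by (rule posdef_sym[OF Spd])
  have step_le: "?h (Sig (Suc n)) \<le> ?h (Sig n)" for n
    using eta_min[of 0 n] step[of n] by simp
  have pd: "posdef (Sig n)" for n
  proof (induction n)
    case 0 show ?case by (rule Sig0)
  next
    case (Suc n)
    have "?h (Sig (Suc n)) \<le> ereal (?H (Sig n))" using step_le[of n] h_rho_hr[OF Suc.IH] by simp
    then have "?h (Sig (Suc n)) \<noteq> \<infinity>" by auto
    then show ?case unfolding h_rho_def by (auto split: if_splits)
  qed
  have dec: "?H (Sig (Suc n)) \<le> ?H (Sig n)" for n
    using step_le[of n] h_rho_hr[OF pd[of n]] h_rho_hr[OF pd[of "Suc n"]] by simp
  have decm: "m \<le> n \<Longrightarrow> ?H (Sig n) \<le> ?H (Sig m)" for m n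
  proof (induction n rule: dec_induct)
    case base then show ?case by simp
  next
    case (step n) then show ?case using dec[of n] by linarith
  qed
  define c where "c = ?H (Sig 0)"
  have Fle: "ln (det (Sig n)) + trace (matrix_inv (Sig n) ** S) \<le> c" for n
  proof -
    have "?H (Sig n) \<le> c" unfolding c_def using decm[of 0 n] by simp
    moreover have "0 \<le> \<rho> / 2 * (infdist (Sig n) ?C)\<^sup>2" using rho_pos by simp
    ultimately show ?thesis unfolding hr_def by linarith
  qed
  obtain a0 b0 where a0: "a0 > 0" and coer: "\<And>X. posdef X \<Longrightarrow> ln (det X) + trace (matrix_inv X ** S) \<le> c \<Longrightarrow>
      qlb a0 X \<and> (\<forall>x. x \<bullet> (X *v x) \<le> b0 * (x \<bullet> x))"
    using coercive[OF Spd, of c] by blast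
  have qa: "qlb a0 (Sig n)" for n using coer[OF pd Fle] by blast
  have ub: "x \<bullet> (Sig n *v x) \<le> b0 * (x \<bullet> x)" for n x using coer[OF pd Fle] by blast
  define B where "B = real (CARD('p))^2 * b0"
  have nB: "norm (Sig n) \<le> B" for n
    unfolding B_def by (rule norm_bound_quad[OF posdef_sym[OF pd] posdef_psd[OF pd] ub])
  have bnd: "bounded (range Sig)" unfolding bounded_iff using nB by blast
  have part3: "\<exists>T \<in> proj_set ?C L. matrix_inv L - matrix_inv L ** S ** matrix_inv L + \<rho> *\<^sub>R (L - T) = 0"
    if hyp: "\<exists>r. strict_mono r \<and> (Sig \<circ> r) \<longlonglongrightarrow> L" for L
  proof -
    obtain r where r: "strict_mono r" and lim: "(Sig \<circ> r) \<longlonglongrightarrow> L" using hyp by blast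
    have alwsym: "transpose (Sig n) = Sig n" for n by (rule posdef_sym[OF pd])
    have Lsym: "transpose L = L"
    proof -
      have "(\<lambda>n. transpose ((Sig \<circ> r) n)) \<longlonglongrightarrow> transpose L" by (rule tendsto_transpose[OF lim])
      moreover have "(\<lambda>n. transpose ((Sig \<circ> r) n)) = Sig \<circ> r" using alwsym by (simp add: fun_eq_iff)
      ultimately show ?thesis using lim LIMSEQ_unique by metis
    qed
    have qL: "qlb a0 L" unfolding qlb_def
    proof
      fix x :: "real^'p"
      have "(\<lambda>n. x \<bullet> ((Sig \<circ> r) n *v x)) \<longlonglongrightarrow> x \<bullet> (L *v x)" by (rule tendsto_quad[OF lim])
      moreover have "eventually (\<lambda>n. a0 * (x \<bullet> x) \<le> x \<bullet> ((Sig \<circ> r) n *v x)) sequentially"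
        using qa unfolding qlb_def by simp
      ultimately show "a0 * (x \<bullet> x) \<le> x \<bullet> (L *v x)"
        by (intro tendsto_le[OF trivial_limit_sequentially _ tendsto_const])
    qed
    have Lpd: "posdef L" by (rule qlb_posdef[OF Lsym a0 qL])
    have Hlim: "(\<lambda>n. ?H ((Sig \<circ> r) n)) \<longlonglongrightarrow> ?H L"
      by (rule hr_cont[OF lim Lpd]) (simp add: alwsym)
    have HL: "?H L \<le> ?H (Sig j)" for j
    proof (rule tendsto_le[OF trivial_limit_sequentially tendsto_const Hlim])
      show "eventually (\<lambda>n. ?H ((Sig \<circ> r) n) \<le> ?H (Sig j)) sequentially"
        unfolding eventually_sequentially
      proof (intro exI allI impI)
        fix n assume "j \<le> n"
        then have "j \<le> r n" using seq_suble[OF r, of n] by linarith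
        then show "?H ((Sig \<circ> r) n) \<le> ?H (Sig j)" using decm by simp
      qed
    qed
    have hmin: "ereal (?H L) \<le> ?h (Sig j + e *\<^sub>R (SigHat j - Sig j))" if "e \<in> {0..1}" for j e
    proof -
      have "ereal (?H L) \<le> ereal (?H (Sig (Suc j)))" using HL by simp
      also have "\<dots> = ?h (Sig (Suc j))" using h_rho_hr[OF pd[of "Suc j"]] by simp
      also have "\<dots> \<le> ?h (Sig j + e *\<^sub>R (SigHat j - Sig j))" using eta_min[OF that, of j] step[of j] by simp
      finally show ?thesis .
    qed
    have ThC: "Theta n \<in> ?C" for n using Theta[of n] by (simp add: proj_set_def)
    have Thsym: "transpose (Theta n) = Theta n" for n using ThC[of n] by (simp add: sparse_set_def symmetric_mat_def)
    have nTh: "norm (Theta n) \<le> 2 * B" for n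
    proof -
      have "dist (Sig n) (Theta n) \<le> dist (Sig n) 0" using Theta[of n] zero_sparse[of k] unfolding proj_set_def by blast
      then have "norm (Sig n - Theta n) \<le> norm (Sig n)" by (simp add: dist_norm)
      moreover have "norm (Theta n) \<le> norm (Sig n) + norm (Sig n - Theta n)" by (metis norm_triangle_sub add.commute norm_minus_commute)
      ultimately show ?thesis using nB[of n] by linarith
    qed
    define A where "A n = matrix_inv (Sig n)" for n
    have Apd: "posdef (A n)" for n unfolding A_def using posdef_inv_sym(2)[OF pd] .
    have Asym: "transpose (A n) = A n" for n unfolding A_def using posdef_inv_sym(1)[OF pd] .
    define BA where "BA = real (CARD('p))^2 * (1/a0)"
    have BApos: "0 \<le> BA" unfolding BA_def using a0 by simp
    have nA: "norm (A n) \<le> BA" for n unfolding A_def BA_def using posdef_inv(5)[OF pd qa a0] .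
    define R where "R n = \<rho> *\<^sub>R Theta n + A n ** S ** A n" for n
    have eqn: "\<rho> *\<^sub>R SigHat n + A n ** SigHat n ** A n = R n" for n unfolding A_def R_def by (rule SigHat)
    have Rsym: "transpose (R n) = R n" for n
      unfolding R_def by (simp add: transpose_add transpose_scale matrix_transpose_mul Asym Ssym Thsym matrix_mul_assoc)
    have Hsym: "transpose (SigHat n) = SigHat n" for n by (rule hat_sym[OF Apd rho_pos eqn Rsym])
    define BR where "BR = \<rho> * (2 * B) + BA * norm S * BA"
    have nR: "norm (R n) \<le> BR" for n
    proof -
      have "norm (R n) \<le> norm (\<rho> *\<^sub>R Theta n) + norm (A n ** S ** A n)" unfolding R_def by (rule norm_triangle_ineq)
      also have "norm (\<rho> *\<^sub>R Theta n) \<le> \<rho> * (2 * B)" using nTh[of n] rho_pos by simp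
      also have "norm (A n ** S ** A n) \<le> BA * norm S * BA"
      proof -
        have "norm (A n ** S ** A n) \<le> norm (A n ** S) * norm (A n)" by (rule mm_norm)
        also have "\<dots> \<le> (norm (A n) * norm S) * norm (A n)" by (intro mult_right_mono mm_norm) simp
        also have "\<dots> \<le> (BA * norm S) * BA" using nA[of n] BApos
          by (intro mult_mono) (simp_all add: mult_right_mono)
        finally show ?thesis .
      qed
      finally show ?thesis unfolding BR_def by simp
    qed
    have nH: "norm (SigHat n) \<le> BR / \<rho>" for n
    proof -
      have "norm (SigHat n) \<le> norm (R n) / \<rho>" by (rule hat_bound[OF Apd rho_pos eqn])
      also have "\<dots> \<le> BR / \<rho>" using nR[of n] rho_pos by (simp add: divide_right_mono)
      finally show ?thesis .
    qed
    define f where "f n = (Theta (r n), SigHat (r n))" for n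
    have fb: "bounded (range f)" unfolding bounded_iff
    proof (intro exI ballI)
      fix y assume "y \<in> range f"
      then obtain n where y: "y = f n" by blast
      have "norm y \<le> norm (Theta (r n)) + norm (SigHat (r n))" unfolding y f_def by (rule norm_Pair_le)
      also have "\<dots> \<le> 2 * B + BR / \<rho>" using nTh nH by (intro add_mono)
      finally show "norm y \<le> 2 * B + BR / \<rho>" .
    qed
    obtain lp r2 where r2: "strict_mono r2" and flim: "(f \<circ> r2) \<longlonglongrightarrow> lp"
      using bounded_imp_convergent_subsequence[OF fb] by blast
    define q where "q = r \<circ> r2"
    define T where "T = fst lp"
    define Sh where "Sh = snd lp"
    have qm: "strict_mono q" unfolding q_def using strict_mono_o[OF r r2] .
    have SigQ: "(\<lambda>n. Sig (q n)) \<longlonglongrightarrow> L"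
      using LIMSEQ_subseq_LIMSEQ[OF lim r2] unfolding q_def by (simp add: comp_def)
    have ThQ: "(\<lambda>n. Theta (q n)) \<longlonglongrightarrow> T"
      using tendsto_fst[OF flim] unfolding q_def T_def f_def by (simp add: comp_def)
    have HQ: "(\<lambda>n. SigHat (q n)) \<longlonglongrightarrow> Sh"
      using tendsto_snd[OF flim] unfolding q_def Sh_def f_def by (simp add: comp_def)
    have cl: "\<And>x l. (\<forall>n. x n \<in> ?C) \<Longrightarrow> x \<longlonglongrightarrow> l \<Longrightarrow> l \<in> ?C"
      using closed_sparse[unfolded closed_sequential_limits] by blast
    have TC: "T \<in> ?C" by (rule cl[OF _ ThQ]) (simp add: ThC)
    have Tproj: "T \<in> proj_set ?C L" unfolding proj_set_def
    proof (intro CollectI conjI ballI TC)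
      fix Y assume YC: "Y \<in> ?C"
      have "(\<lambda>n. dist (Sig (q n)) (Theta (q n))) \<longlonglongrightarrow> dist L T" by (intro tendsto_intros SigQ ThQ)
      moreover have "(\<lambda>n. dist (Sig (q n)) Y) \<longlonglongrightarrow> dist L Y" by (intro tendsto_intros SigQ)
      moreover have "eventually (\<lambda>n. dist (Sig (q n)) (Theta (q n)) \<le> dist (Sig (q n)) Y) sequentially"
        using Theta YC by (simp add: proj_set_def)
      ultimately show "dist L T \<le> dist L Y" by (intro tendsto_le[OF trivial_limit_sequentially]) 
    qed
    define Li where "Li = matrix_inv L"
    have AQ: "(\<lambda>n. A (q n)) \<longlonglongrightarrow> Li"
      unfolding A_def Li_def by (rule inv_cont(2)[OF SigQ Lpd]) (simp add: alwsym)
    have eqlim: "\<rho> *\<^sub>R Sh + Li ** Sh ** Li = \<rho> *\<^sub>R T + Li ** S ** Li"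
    proof -
      have l1: "(\<lambda>n. \<rho> *\<^sub>R SigHat (q n) + A (q n) ** SigHat (q n) ** A (q n)) \<longlonglongrightarrow> \<rho> *\<^sub>R Sh + Li ** Sh ** Li"
        by (intro tendsto_intros tendsto_mm HQ AQ)
      have l2: "(\<lambda>n. \<rho> *\<^sub>R Theta (q n) + A (q n) ** S ** A (q n)) \<longlonglongrightarrow> \<rho> *\<^sub>R T + Li ** S ** Li"
        by (intro tendsto_intros tendsto_mm ThQ AQ)
      have "(\<lambda>n. \<rho> *\<^sub>R SigHat (q n) + A (q n) ** SigHat (q n) ** A (q n)) = (\<lambda>n. \<rho> *\<^sub>R Theta (q n) + A (q n) ** S ** A (q n))"
        using eqn unfolding R_def by simp
      with l1 have l1': "(\<lambda>n. \<rho> *\<^sub>R Theta (q n) + A (q n) ** S ** A (q n)) \<longlonglongrightarrow> \<rho> *\<^sub>R Sh + Li ** Sh ** Li"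
        by simp
      show ?thesis by (rule LIMSEQ_unique[OF l1' l2])
    qed
    have Shsym: "transpose Sh = Sh"
    proof -
      have "(\<lambda>n. transpose (SigHat (q n))) \<longlonglongrightarrow> transpose Sh" by (rule tendsto_transpose[OF HQ])
      moreover have "(\<lambda>n. transpose (SigHat (q n))) = (\<lambda>n. SigHat (q n))" using Hsym by simp
      ultimately have "(\<lambda>n. SigHat (q n)) \<longlonglongrightarrow> transpose Sh" by simp
      then show ?thesis by (rule LIMSEQ_unique[OF _ HQ])
    qed
    define v0 where "v0 = Sh - L"
    have v0sym: "transpose v0 = v0" unfolding v0_def by (simp add: transpose_diff Shsym Lsym)
    have LiL: "Li ** L = mat 1" unfolding Li_def by (rule inv_mat(2)[OF posdef_invertible[OF Lpd]])
    have ShE: "Li ** Sh ** Li = Li + Li ** v0 ** Li"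
    proof -
      have "Sh = L + v0" unfolding v0_def by simp
      then have "Li ** Sh ** Li = Li ** L ** Li + Li ** v0 ** Li" by (simp add: matrix_add_ldistrib mm_add_r)
      then show ?thesis by (simp add: LiL)
    qed
    have G: "Li - Li ** S ** Li + \<rho> *\<^sub>R (L - T) = - (\<rho> *\<^sub>R v0 + Li ** v0 ** Li)"
    proof -
      have "(Li - Li ** S ** Li + \<rho> *\<^sub>R (L - T)) + (\<rho> *\<^sub>R v0 + Li ** v0 ** Li)
          = (\<rho> *\<^sub>R (L + v0) + (Li + Li ** v0 ** Li)) - (\<rho> *\<^sub>R T + Li ** S ** Li)"
        by (rule mod_id)
      also have "\<rho> *\<^sub>R (L + v0) + (Li + Li ** v0 ** Li) = \<rho> *\<^sub>R Sh + Li ** Sh ** Li"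
        unfolding ShE v0_def by simp
      also have "\<dots> - (\<rho> *\<^sub>R T + Li ** S ** Li) = 0" using eqlim by simp
      finally show ?thesis by (simp only: eq_neg_iff_add_eq_0)
    qed
    have mini: "?H L \<le> ?H (L + e *\<^sub>R v0)" if e: "0 < e" "e \<le> 1" and Ppd: "posdef (L + e *\<^sub>R v0)" for e
    proof -
      define X where "X n = Sig (q n) + e *\<^sub>R (SigHat (q n) - Sig (q n))" for n
      have Xlim: "X \<longlonglongrightarrow> L + e *\<^sub>R v0" unfolding X_def v0_def by (intro tendsto_intros SigQ HQ)
      have Xsym: "eventually (\<lambda>n. transpose (X n) = X n) sequentially"
        unfolding X_def by (simp add: transpose_add transpose_scale transpose_diff alwsym Hsym)
      have HX: "(\<lambda>n. ?H (X n)) \<longlonglongrightarrow> ?H (L + e *\<^sub>R v0)" by (rule hr_cont[OF Xlim Ppd Xsym])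
      have "eventually (\<lambda>n. ?H L \<le> ?H (X n)) sequentially"
        using inv_cont(1)[OF Xlim Ppd Xsym]
      proof eventually_elim
        case (elim n)
        have "ereal (?H L) \<le> ?h (X n)" unfolding X_def using hmin e by simp
        then show ?case using h_rho_hr[OF elim] by simp
      qed
      then show ?thesis by (intro tendsto_le[OF trivial_limit_sequentially HX tendsto_const])
    qed
    have "v0 = 0"
      by (rule v_zero[OF Lpd v0sym rho_pos Tproj Ssym G[unfolded Li_def] mini])
    then have "Li - Li ** S ** Li + \<rho> *\<^sub>R (L - T) = 0" using G by simp
    then show ?thesis using Tproj unfolding Li_def by blast
  qed
  show ?thesis using bnd pd part3 by blast
qed


end
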